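(* Let $F$ and $\tilde F$ be continuous distribution functions of positive random variables with finite means $\overline{\tau}$ and $\tilde{\overline{\tau}}$ and infinite variances, i.e. $\int_0^\infty 2s(1-F(s))\,ds=\int_0^\infty 2s(1-\tilde F(s))\,ds=\infty$. Let $M_{eq}$ and $\tilde M_{eq}$ be the equilibrium mean square displacements associated with $F$ and $\tilde F$ respectively (with the same velocity distribution, $E[|V_i|^2]=v^2$). Assume $1-F(t)\sim1-\tilde F(t)$ as $t\to\infty$. Then $$\overline{\tau}\,M_{eq}(t)\sim\tilde{\overline{\tau}}\,\tilde M_{eq}(t)\quad\text{as }t\to\infty.$$
   Context: Equilibrium mean square displacement associated with $F$: let $\overline{\tau}=\int_0^\infty(1-F(s))\,ds$, let $\tau_1,\tau_2,\dots$ be i.i.d. with distribution $F$, let $T_0$ be independent of the $\tau_i$ with distribution function $F_0(t)=\frac1{\overline{\tau}}\int_0^t(1-F(s))\,ds$, and $T_i=T_{i-1}+\tau_i$. Let $V_0,V_1,\dots$ be i.i.d. random vectors in $\mathbb{R}^d$, independent of the times, with $E[V_i]=0$ and $E[|V_i|^2]=v^2\in(0,\infty)$. Set $V(t)=V_0$ for $0\le t<T_0$, $V(t)=V_i$ for $T_{i-1}\le t<T_i$, $X(t)=\int_0^tV(s)\,ds$, and $M_{eq}(t)=E[|X(t)|^2]$. $\tilde M_{eq}$ is defined in the same way from $\tilde F$. *)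

theory Defs
  imports "HOL-Probability.Probability" "HOL-Library.Landau_Symbols"
begin

text \<open>Mean of a positive random variable with distribution function F:
  the integral of the tail 1 - F over [0,\<infinity>).\<close>
definition mean_time :: "(real \<Rightarrow> real) \<Rightarrow> real" where
  "mean_time F = (LBINT s:{0..}. 1 - F s)"

text \<open>Renewal epochs: S 0 = T_0, S (Suc k) = tau_(Suc k), and T_i = S 0 + ... + S i.\<close>
definition renewal_epoch :: "(nat \<Rightarrow> 'a \<Rightarrow> real) \<Rightarrow> nat \<Rightarrow> 'a \<Rightarrow> real" where
  "renewal_epoch S i \<omega> = (\<Sum>k\<le>i. S k \<omega>)"

text \<open>V(t) = V_0 for t < T_0 and V(t) = V_i for T_(i-1) \<le> t < T_i.\<close>
definition velocity_proc ::
  "(nat \<Rightarrow> 'a \<Rightarrow> real) \<Rightarrow> (nat \<Rightarrow> 'a \<Rightarrow> 'v) \<Rightarrow> real \<Rightarrow> 'a \<Rightarrow> 'v" where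
  "velocity_proc S V t \<omega> = V (LEAST i. t < renewal_epoch S i \<omega>) \<omega>"

definition displacement ::
  "(nat \<Rightarrow> 'a \<Rightarrow> real) \<Rightarrow> (nat \<Rightarrow> 'a \<Rightarrow> 'v::euclidean_space) \<Rightarrow> real \<Rightarrow> 'a \<Rightarrow> 'v" where
  "displacement S V t \<omega> = (LINT s:{0..t}|lborel. velocity_proc S V s \<omega>)"

definition msd ::
  "'a measure \<Rightarrow> (nat \<Rightarrow> 'a \<Rightarrow> real) \<Rightarrow> (nat \<Rightarrow> 'a \<Rightarrow> 'v::euclidean_space) \<Rightarrow> real \<Rightarrow> real" where
  "msd M S V t = (\<integral>\<omega>. (norm (displacement S V t \<omega>))^2 \<partial>M)"

text \<open>Equilibrium renewal setup on a probability space M with inter-event distribution F: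
  S 0 = T_0 has the equilibrium distribution F_0, S (Suc k) = tau_(k+1) has distribution F,
  all S k are independent, V k are i.i.d., and the family V is independent of the family S.\<close>
definition eq_renewal_setup ::
  "'a measure \<Rightarrow> (real \<Rightarrow> real) \<Rightarrow> (nat \<Rightarrow> 'a \<Rightarrow> real) \<Rightarrow> (nat \<Rightarrow> 'a \<Rightarrow> 'v::euclidean_space) \<Rightarrow> bool" where
  "eq_renewal_setup M F S V \<longleftrightarrow>
     prob_space M \<and>
     prob_space.indep_vars M (\<lambda>_. borel) S UNIV \<and>
     prob_space.indep_vars M (\<lambda>_. borel) V UNIV \<and>
     prob_space.indep_set M
       (sigma_sets (space M) (\<Union>k. {S k -` A \<inter> space M | A. A \<in> sets borel}))
       (sigma_sets (space M) (\<Union>k. {V k -` B \<inter> space M | B. B \<in> sets borel})) \<and>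
     (\<forall>k t. measure M {\<omega> \<in> space M. S (Suc k) \<omega> \<le> t} = F t) \<and>
     (\<forall>t. measure M {\<omega> \<in> space M. S 0 \<omega> \<le> t} = (LBINT s:{0..t}. 1 - F s) / mean_time F) \<and>
     (\<forall>i. distr M borel (V i) = distr M borel (V 0))"

end

theory Submission
  imports Defs "HOL-Library.Landau_Symbols"
begin

lemma set_integrable_indicator_restrict:
  fixes h :: "real \<Rightarrow> real"
  assumes "set_integrable lborel B h" "A \<in> sets lborel" "B \<in> sets lborel"
  shows "set_integrable lborel A (\<lambda>s. indicator B s * h s)"
proof -
  have "set_integrable lborel (A \<inter> B) h" by (rule set_integrable_subset[OF assms(1)]) (use assms in auto)
  then show ?thesis unfolding set_integrable_def
    by (simp add: indicator_inter_arith mult_ac)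
qed

lemma int_equiv:
  fixes f g :: "real \<Rightarrow> real"
  assumes fnn: "\<And>s. 0 \<le> s \<Longrightarrow> 0 \<le> f s"
    and fi: "\<And>t. set_integrable lborel {0..t} f" and gi: "\<And>t. set_integrable lborel {0..t} g"
    and eq: "f \<sim>[at_top] g"
    and div: "filterlim (\<lambda>t. LBINT s:{0..t}. f s) at_top at_top"
  shows "(\<lambda>t. LBINT s:{0..t}. f s) \<sim>[at_top] (\<lambda>t. LBINT s:{0..t}. g s)"
proof -
  have "(\<lambda>t. LBINT s:{0..t}. g s) \<sim>[at_top] (\<lambda>t. LBINT s:{0..t}. f s)"
    unfolding asymp_equiv_altdef
  proof (rule landau_o.smallI)
    fix c :: real assume c: "c > 0"
    have "(\<lambda>x. g x - f x) \<in> o(f)" using asymp_equiv_sym[THEN iffD1, OF eq] unfolding asymp_equiv_altdef .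
    from landau_o.smallD[OF this, of "c/2"] c
    obtain x0 where x0: "\<And>x. x \<ge> x0 \<Longrightarrow> \<bar>g x - f x\<bar> \<le> c/2 * \<bar>f x\<bar>"
      by (auto simp: eventually_at_top_linorder)
    define C where "C = (LBINT s:{0..x0}. \<bar>g s - f s\<bar>)"
    have bound: "\<bar>(LBINT s:{0..t}. g s) - (LBINT s:{0..t}. f s)\<bar> \<le> C + c/2 * (LBINT s:{0..t}. f s)" for t
    proof -
      have i1: "set_integrable lborel {0..t} (\<lambda>s. g s - f s)"
        using fi gi by (intro set_integral_diff(1)) auto
      have i2: "set_integrable lborel {0..x0} (\<lambda>s. \<bar>g s - f s\<bar>)"
        using fi gi by (intro set_integrable_abs set_integral_diff(1)) auto
      have "(LBINT s:{0..t}. g s) - (LBINT s:{0..t}. f s) = (LBINT s:{0..t}. g s - f s)"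
        using fi gi by (simp add: set_integral_diff)
      also have "\<bar>\<dots>\<bar> \<le> (LBINT s:{0..t}. \<bar>g s - f s\<bar>)"
        using set_integral_norm_bound[OF i1] by simp
      also have "\<dots> \<le> (LBINT s:{0..t}. c/2 * f s + indicator {0..x0} s * \<bar>g s - f s\<bar>)"
      proof (rule set_integral_mono)
        show "set_integrable lborel {0..t} (\<lambda>s. \<bar>g s - f s\<bar>)" using i1 by (rule set_integrable_abs)
        have "set_integrable lborel {0..t} (\<lambda>s. indicator {0..x0} s * \<bar>g s - f s\<bar>)"
          by (rule set_integrable_indicator_restrict[OF i2]) auto
        then show "set_integrable lborel {0..t} (\<lambda>s. c/2 * f s + indicator {0..x0} s * \<bar>g s - f s\<bar>)"
          using fi by (intro set_integral_add(1) set_integrable_mult_right) auto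
        fix s assume "s \<in> {0..t}"
        show "\<bar>g s - f s\<bar> \<le> c/2 * f s + indicator {0..x0} s * \<bar>g s - f s\<bar>"
        proof (cases "s \<ge> x0")
          case True then show ?thesis using x0[of s] fnn[of s] \<open>s \<in> {0..t}\<close> c
            by (auto simp: indicator_def)
        next
          case False then show ?thesis using fnn[of s] c \<open>s \<in> {0..t}\<close>
            by (auto simp: indicator_def)
        qed
      qed
      also have "\<dots> = c/2 * (LBINT s:{0..t}. f s) + (LBINT s:{0..t}. indicator {0..x0} s * \<bar>g s - f s\<bar>)"
      proof -
        have "set_integrable lborel {0..t} (\<lambda>s. indicator {0..x0} s * \<bar>g s - f s\<bar>)"
          by (rule set_integrable_indicator_restrict[OF i2]) auto
        then show ?thesis using fi
          by (simp add: set_integral_add set_integral_mult_right set_integrable_mult_right)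
      qed
      also have "(LBINT s:{0..t}. indicator {0..x0} s * \<bar>g s - f s\<bar>) \<le> C"
        unfolding C_def set_lebesgue_integral_def
      proof (rule integral_mono)
        show "integrable lborel (\<lambda>x. indicator {0..x0} x *\<^sub>R \<bar>g x - f x\<bar>)"
          using i2 unfolding set_integrable_def .
        show "integrable lborel (\<lambda>x. indicator {0..t} x *\<^sub>R (indicator {0..x0} x * \<bar>g x - f x\<bar>))"
          using set_integrable_indicator_restrict[OF i2, of "{0..t}"] unfolding set_integrable_def by simp
      qed (auto simp: indicator_def)
      finally show ?thesis by simp
    qed
    have "eventually (\<lambda>t. (LBINT s:{0..t}. f s) \<ge> 2 * C / c) at_top"
      using div by (simp add: filterlim_at_top)
    then show "eventually (\<lambda>t. norm ((LBINT s:{0..t}. g s) - (LBINT s:{0..t}. f s)) \<le> c * norm (LBINT s:{0..t}. f s)) at_top"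
    proof eventually_elim
      case (elim t)
      have "2 * C \<le> c * (LBINT s:{0..t}. f s)" using elim c by (simp add: field_simps)
      moreover have "c * (LBINT s:{0..t}. f s) \<le> c * \<bar>LBINT s:{0..t}. f s\<bar>"
        using c by (intro mult_left_mono) auto
      ultimately have "C + c/2 * (LBINT s:{0..t}. f s) \<le> c * \<bar>LBINT s:{0..t}. f s\<bar>" by linarith
      then show ?case using bound[of t] by simp
    qed
  qed
  then show ?thesis by (rule asymp_equiv_sym[THEN iffD1])
qed

lemma tail_equiv:
  fixes f g :: "real \<Rightarrow> real"
  assumes gnn: "\<And>s. 0 \<le> s \<Longrightarrow> 0 \<le> g s"
    and fi: "set_integrable lborel {0..} f" and gi: "set_integrable lborel {0..} g"
    and eq: "f \<sim>[at_top] g"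
  shows "(\<lambda>t. LBINT s:{t<..}. f s) \<sim>[at_top] (\<lambda>t. LBINT s:{t<..}. g s)"
  unfolding asymp_equiv_altdef
proof (rule landau_o.smallI)
  fix c :: real assume c: "c > 0"
  have "(\<lambda>x. f x - g x) \<in> o(g)" using eq unfolding asymp_equiv_altdef .
  from landau_o.smallD[OF this c]
  obtain x0 where x0: "\<And>x. x \<ge> x0 \<Longrightarrow> \<bar>f x - g x\<bar> \<le> c * \<bar>g x\<bar>"
    by (auto simp: eventually_at_top_linorder)
  have "eventually (\<lambda>t. t \<ge> max x0 0) at_top" by (rule eventually_ge_at_top)
  then show "eventually (\<lambda>t. norm ((LBINT s:{t<..}. f s) - (LBINT s:{t<..}. g s)) \<le> c * norm (LBINT s:{t<..}. g s)) at_top"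
  proof eventually_elim
    case (elim t)
    have fi': "set_integrable lborel {t<..} f" by (rule set_integrable_subset[OF fi]) (use elim in auto)
    have gi': "set_integrable lborel {t<..} g" by (rule set_integrable_subset[OF gi]) (use elim in auto)
    have i1: "set_integrable lborel {t<..} (\<lambda>s. f s - g s)" using fi' gi' by (rule set_integral_diff(1))
    have pw: "\<bar>f s - g s\<bar> \<le> c * g s" if "s \<in> {t<..}" for s
      using x0[of s] gnn[of s] elim that by auto
    have "(LBINT s:{t<..}. f s) - (LBINT s:{t<..}. g s) = (LBINT s:{t<..}. f s - g s)"
      using fi' gi' by (simp add: set_integral_diff)
    also have "\<bar>\<dots>\<bar> \<le> (LBINT s:{t<..}. \<bar>f s - g s\<bar>)"
      using set_integral_norm_bound[OF i1] by simp
    also have "\<dots> \<le> (LBINT s:{t<..}. c * g s)"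
      using pw
      by (intro set_integral_mono set_integrable_abs i1 set_integrable_mult_right gi') fastforce+
    also have "\<dots> = c * (LBINT s:{t<..}. g s)" by simp
    also have "\<dots> \<le> c * \<bar>LBINT s:{t<..}. g s\<bar>" using c by (intro mult_left_mono) auto
    finally show ?case by simp
  qed
qed

lemma asymp_equiv_add_nonneg:
  fixes f1 f2 g1 g2 :: "real \<Rightarrow> real"
  assumes "f1 \<sim>[at_top] g1" "f2 \<sim>[at_top] g2"
    and "eventually (\<lambda>x. 0 \<le> g1 x \<and> 0 \<le> g2 x) at_top"
  shows "(\<lambda>x. f1 x + f2 x) \<sim>[at_top] (\<lambda>x. g1 x + g2 x)"
  unfolding asymp_equiv_altdef
proof (rule landau_o.smallI)
  fix c :: real assume c: "c > 0"
  have a: "(\<lambda>x. f1 x - g1 x) \<in> o(g1)" using assms(1) unfolding asymp_equiv_altdef .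
  have b: "(\<lambda>x. f2 x - g2 x) \<in> o(g2)" using assms(2) unfolding asymp_equiv_altdef .
  from landau_o.smallD[OF a c] landau_o.smallD[OF b c] assms(3)
  show "eventually (\<lambda>x. norm (f1 x + f2 x - (g1 x + g2 x)) \<le> c * norm (g1 x + g2 x)) at_top"
  proof eventually_elim
    case (elim x)
    then show ?case by (simp add: abs_le_iff algebra_simps)
  qed
qed

lemma mono_setint:
  fixes f :: "real \<Rightarrow> real"
  assumes "continuous_on UNIV f" "\<And>u. 0 \<le> u \<Longrightarrow> 0 \<le> f u"
  shows "mono (\<lambda>s. LBINT u:{0..s}. f u)"
proof (rule monoI)
  fix s s' :: real assume ss: "s \<le> s'"
  have i: "set_integrable lborel {0..x} f" for x
    by (rule borel_integrable_atLeastAtMost') (rule continuous_on_subset[OF assms(1)], auto)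
  show "(LBINT u:{0..s}. f u) \<le> (LBINT u:{0..s'}. f u)"
    unfolding set_lebesgue_integral_def
    using i[of s] i[of s'] ss assms(2) unfolding set_integrable_def
    by (intro integral_mono) (auto simp: indicator_def)
qed

lemma setint_nonneg:
  fixes f :: "real \<Rightarrow> real"
  assumes "\<And>u. 0 \<le> u \<Longrightarrow> 0 \<le> f u"
  shows "0 \<le> (LBINT u:{0..s}. f u)"
  unfolding set_lebesgue_integral_def using assms
  by (intro integral_nonneg_AE) (auto simp: indicator_def)

definition Phi :: "(real \<Rightarrow> real) \<Rightarrow> real \<Rightarrow> real" where
  "Phi F s = (LBINT u:{0..s}. 1 - F u)"
definition Gt :: "(real \<Rightarrow> real) \<Rightarrow> real \<Rightarrow> real" where
  "Gt F s = mean_time F - Phi F s"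
definition WW :: "(real \<Rightarrow> real) \<Rightarrow> real \<Rightarrow> real" where
  "WW F s = (LBINT u:{0..s}. 2 * u * (1 - F u))"
definition hh :: "(real \<Rightarrow> real) \<Rightarrow> real \<Rightarrow> real" where
  "hh F s = 2 * s * Gt F s + WW F s"
definition AA :: "(real \<Rightarrow> real) \<Rightarrow> real \<Rightarrow> real" where
  "AA F t = (LBINT s:{0..t}. hh F s)"

locale Fprops =
  fixes F :: "real \<Rightarrow> real"
  assumes Fc: "continuous_on UNIV F"
    and Fle1: "\<And>s. F s \<le> 1"
    and Fm: "set_integrable lborel {0..} (\<lambda>s. 1 - F s)"
    and Fv: "nn_integral lborel (\<lambda>s. ennreal (2 * s * (1 - F s)) * indicator {0..} s) = \<infinity>"
begin

lemma Fmeas[measurable]: "F \<in> borel_measurable borel"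
  using Fc by (rule borel_measurable_continuous_onI)

lemma cont1: "continuous_on UNIV (\<lambda>u. 1 - F u)" using Fc by (intro continuous_intros)
lemma cont2: "continuous_on UNIV (\<lambda>u. 2 * u * (1 - F u))" using Fc by (intro continuous_intros)

lemma Phi_mono: "mono (Phi F)"
  unfolding Phi_def[abs_def] by (rule mono_setint[OF cont1]) (use Fle1 in auto)
lemma WW_mono: "mono (WW F)"
  unfolding WW_def[abs_def] by (rule mono_setint[OF cont2]) (use Fle1 in auto)
lemma WW_nonneg: "0 \<le> WW F s"
  unfolding WW_def by (rule setint_nonneg) (use Fle1 in auto)

lemma Gt_tail: assumes "0 \<le> s" shows "Gt F s = (LBINT u:{s<..}. 1 - F u)"
proof -
  have "{0..} = {0..s} \<union> {s<..}" using assms by auto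
  then have "mean_time F = (LBINT u:({0..s} \<union> {s<..}). 1 - F u)"
    unfolding mean_time_def by simp
  also have "\<dots> = Phi F s + (LBINT u:{s<..}. 1 - F u)"
    unfolding Phi_def using assms
    by (intro set_integral_Un set_integrable_subset[OF Fm]) auto
  finally have "mean_time F = Phi F s + (LBINT u:{s<..}. 1 - F u)" .
  then show ?thesis unfolding Gt_def by simp
qed

lemma Gt_nonneg: assumes "0 \<le> s" shows "0 \<le> Gt F s"
  unfolding Gt_tail[OF assms] set_lebesgue_integral_def using Fle1
  by (intro integral_nonneg_AE) (auto simp: indicator_def)

lemma Gt_le: assumes "0 \<le> s" shows "Gt F s \<le> mean_time F"
proof -
  have "0 \<le> Phi F s" unfolding Phi_def by (rule setint_nonneg) (use Fle1 in auto)
  then show ?thesis unfolding Gt_def by simp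
qed

lemma hh_meas: "hh F \<in> borel_measurable borel"
proof -
  have "Phi F \<in> borel_measurable borel" by (rule borel_measurable_mono[OF Phi_mono])
  moreover have "WW F \<in> borel_measurable borel" by (rule borel_measurable_mono[OF WW_mono])
  ultimately show ?thesis unfolding hh_def[abs_def] Gt_def by measurable
qed

lemma hh_int: "set_integrable lborel {0..t} (hh F)"
  unfolding set_integrable_def
proof (rule integrableI_bounded_set_indicator[where B="2 * \<bar>t\<bar> * mean_time F + WW F t"])
  show "AE x\<in>{0..t} in lborel. norm (hh F x) \<le> 2 * \<bar>t\<bar> * mean_time F + WW F t"
  proof (intro AE_I2 impI)
    fix x assume x: "x \<in> {0..t}"
    have "0 \<le> mean_time F" using Gt_le[of 0] Gt_nonneg[of 0] by simp
    have "x * Gt F x \<le> \<bar>t\<bar> * mean_time F"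
      using x Gt_le[of x] Gt_nonneg[of x] \<open>0 \<le> mean_time F\<close> by (intro mult_mono) auto
    moreover have "WW F x \<le> WW F t" using WW_mono x by (auto simp: mono_def)
    moreover have "0 \<le> x * Gt F x" using x Gt_nonneg[of x] by auto
    ultimately show "norm (hh F x) \<le> 2 * \<bar>t\<bar> * mean_time F + WW F t"
      unfolding hh_def using WW_nonneg[of x] by auto
  qed
qed (use hh_meas in \<open>auto simp: emeasure_lborel_Icc_eq\<close>)

lemma hh_nonneg: "0 \<le> s \<Longrightarrow> 0 \<le> hh F s"
  unfolding hh_def using Gt_nonneg[of s] WW_nonneg[of s] by auto

lemma WW_unbounded: "\<exists>s. B \<le> WW F s"
proof (rule ccontr)
  assume "\<not> ?thesis"
  then have b: "WW F s \<le> B" for s by (metis nle_le)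
  have ii: "set_integrable lborel {0..x} (\<lambda>u. 2 * u * (1 - F u))" for x
    by (rule borel_integrable_atLeastAtMost') (rule continuous_on_subset[OF cont2], auto)
  have eq: "(\<integral>\<^sup>+ u. ennreal (2 * u * (1 - F u)) * indicator {0..real n} u \<partial>lborel) = ennreal (WW F (real n))" for n
  proof -
    have "(\<integral>\<^sup>+ u. ennreal (2 * u * (1 - F u)) * indicator {0..real n} u \<partial>lborel)
       = (\<integral>\<^sup>+ u. ennreal (indicator {0..real n} u * (2 * u * (1 - F u))) \<partial>lborel)"
      by (intro nn_integral_cong) (auto simp: indicator_def)
    also have "\<dots> = ennreal (WW F (real n))"
      unfolding WW_def set_lebesgue_integral_def using ii[of "real n"] Fle1 unfolding set_integrable_def
      by (subst nn_integral_eq_integral) (auto simp: indicator_def)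
    finally show ?thesis .
  qed
  have "(\<integral>\<^sup>+ u. ennreal (2 * u * (1 - F u)) * indicator {0..} u \<partial>lborel)
      = (\<integral>\<^sup>+ u. (SUP n. ennreal (2 * u * (1 - F u)) * indicator {0..real n} u) \<partial>lborel)"
  proof (intro nn_integral_cong)
    fix u :: real
    show "ennreal (2 * u * (1 - F u)) * indicator {0..} u = (SUP n. ennreal (2 * u * (1 - F u)) * indicator {0..real n} u)"
    proof (cases "0 \<le> u")
      case True
      obtain n where n: "u \<le> real n" using real_arch_simple by blast
      have "(SUP n. ennreal (2 * u * (1 - F u)) * indicator {0..real n} u) = ennreal (2 * u * (1 - F u))"
      proof (rule antisym)
        show "(SUP n. ennreal (2 * u * (1 - F u)) * indicator {0..real n} u) \<le> ennreal (2 * u * (1 - F u))"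
          by (rule SUP_least) (auto simp: indicator_def)
        show "ennreal (2 * u * (1 - F u)) \<le> (SUP n. ennreal (2 * u * (1 - F u)) * indicator {0..real n} u)"
          by (rule SUP_upper2[of n]) (use True n in \<open>auto simp: indicator_def\<close>)
      qed
      then show ?thesis using True by simp
    qed (simp add: indicator_def)
  qed
  also have "\<dots> = (SUP n. \<integral>\<^sup>+ u. ennreal (2 * u * (1 - F u)) * indicator {0..real n} u \<partial>lborel)"
    by (rule nn_integral_monotone_convergence_SUP)
       (auto simp: incseq_def le_fun_def indicator_def intro!: mult_right_mono)
  also have "\<dots> \<le> ennreal B"
    unfolding eq by (rule SUP_least) (use b in \<open>auto intro: ennreal_leI\<close>)
  finally have "\<infinity> \<le> ennreal B" using Fv by simp
  then show False by (simp add: top_unique)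
qed

lemma WW_lim: "filterlim (WW F) at_top at_top"
  unfolding filterlim_at_top
proof
  fix B
  obtain s where "B \<le> WW F s" using WW_unbounded by blast
  then show "eventually (\<lambda>x. B \<le> WW F x) at_top"
    unfolding eventually_at_top_linorder
    by (intro exI[of _ s] allI impI) (rule order_trans[OF _ monoD[OF WW_mono]])
qed

lemma AA_lim: "filterlim (AA F) at_top at_top"
proof -
  obtain y0 where y0: "1 \<le> WW F y0" using WW_unbounded by blast
  define y1 where "y1 = max y0 0"
  have "WW F y0 \<le> WW F y1" unfolding y1_def by (rule monoD[OF WW_mono]) simp
  then have y1: "1 \<le> WW F y1" "0 \<le> y1" using y0 unfolding y1_def by auto
  have lb: "t - y1 \<le> AA F t" if t: "t \<ge> y1" for t
  proof -
    have "t - y1 = (LBINT s:{0..t}. indicator {y1..} s)"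
    proof -
      have "(LBINT s:{0..t}. indicator {y1..} s) = (LBINT s. indicator {y1..t} s)"
        unfolding set_lebesgue_integral_def using y1
        by (intro Bochner_Integration.integral_cong) (auto simp: indicator_def)
      also have "\<dots> = t - y1" using t by simp
      finally show ?thesis by simp
    qed
    also have "\<dots> \<le> AA F t"
      unfolding AA_def
    proof (rule set_integral_mono)
      show "set_integrable lborel {0..t} (\<lambda>s::real. indicator {y1..} s :: real)"
        unfolding set_integrable_def
        by (rule integrableI_bounded_set_indicator[where B=1]) (auto simp: emeasure_lborel_Icc_eq)
      show "set_integrable lborel {0..t} (hh F)" by (rule hh_int)
      fix s assume s: "s \<in> {0..t}"
      show "indicator {y1..} s \<le> hh F s"
      proof (cases "y1 \<le> s")
        case True
        have "WW F y1 \<le> WW F s" by (rule monoD[OF WW_mono]) (use True in simp)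
        then have "1 \<le> WW F s" using y1 by linarith
        moreover have "0 \<le> s * Gt F s" using True s Gt_nonneg[of s] by simp
        ultimately show ?thesis using True s unfolding hh_def by auto
      qed (use s hh_nonneg in auto)
    qed
    finally show ?thesis .
  qed
  have "filterlim (\<lambda>t. -y1 + t) at_top at_top"
    by (rule filterlim_tendsto_add_at_top[OF tendsto_const filterlim_ident])
  moreover have "eventually (\<lambda>t. -y1 + t \<le> AA F t) at_top"
    using lb unfolding eventually_at_top_linorder by (intro exI[of _ y1]) auto
  ultimately show ?thesis
    by (rule filterlim_at_top_mono)
qed

end

lemma AA_equiv:
  assumes "Fprops F" "Fprops F'"
    and tails: "(\<lambda>t. 1 - F t) \<sim>[at_top] (\<lambda>t. 1 - F' t)"
  shows "AA F \<sim>[at_top] AA F'"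
proof -
  interpret A: Fprops F by fact
  interpret B: Fprops F' by fact
  have T: "(\<lambda>t. LBINT s:{t<..}. 1 - F s) \<sim>[at_top] (\<lambda>t. LBINT s:{t<..}. 1 - F' s)"
    by (rule tail_equiv[OF _ A.Fm B.Fm tails]) (use B.Fle1 in auto)
  have e1: "eventually (\<lambda>t. Gt F t = (LBINT s:{t<..}. 1 - F s)) at_top"
    by (auto simp: A.Gt_tail eventually_at_top_linorder intro!: exI[of _ 0])
  have e2: "eventually (\<lambda>t. Gt F' t = (LBINT s:{t<..}. 1 - F' s)) at_top"
    by (auto simp: B.Gt_tail eventually_at_top_linorder intro!: exI[of _ 0])
  have G: "Gt F \<sim>[at_top] Gt F'"
    using asymp_equiv_cong[OF e1 e2] T by simp
  have eqW: "(\<lambda>u. 2 * u * (1 - F u)) \<sim>[at_top] (\<lambda>u. 2 * u * (1 - F' u))"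
    using asymp_equiv_mult[OF asymp_equiv_refl[of "\<lambda>u. 2 * u"] tails] by (simp add: mult.assoc)
  have i1: "set_integrable lborel {0..t} (\<lambda>u. 2 * u * (1 - F u))" for t
    by (rule borel_integrable_atLeastAtMost', rule continuous_on_subset[OF A.cont2], simp)
  have i2: "set_integrable lborel {0..t} (\<lambda>u. 2 * u * (1 - F' u))" for t
    by (rule borel_integrable_atLeastAtMost', rule continuous_on_subset[OF B.cont2], simp)
  have lim: "filterlim (\<lambda>t. LBINT u:{0..t}. 2 * u * (1 - F u)) at_top at_top"
      using A.WW_lim unfolding WW_def[abs_def] .
  have nn: "0 \<le> 2 * u * (1 - F u)" if "0 \<le> u" for u using A.Fle1[of u] that by simp
  have W: "WW F \<sim>[at_top] WW F'"
    unfolding WW_def[abs_def] by (rule int_equiv[OF nn i1 i2 eqW lim])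
  have M: "(\<lambda>s. 2 * s * Gt F s) \<sim>[at_top] (\<lambda>s. 2 * s * Gt F' s)"
    by (rule asymp_equiv_mult[OF asymp_equiv_refl G])
  have ev: "eventually (\<lambda>x. 0 \<le> 2 * x * Gt F' x \<and> 0 \<le> WW F' x) at_top"
    unfolding eventually_at_top_linorder
    by (intro exI[of _ 0] allI impI conjI) (simp_all add: B.WW_nonneg B.Gt_nonneg)
  have H: "hh F \<sim>[at_top] hh F'"
    unfolding hh_def[abs_def] by (rule asymp_equiv_add_nonneg[OF M W ev])
  have AAe: "AA G = (\<lambda>t. LBINT s:{0..t}. hh G s)" for G by (rule ext) (simp add: AA_def)
  have "filterlim (\<lambda>t. LBINT s:{0..t}. hh F s) at_top at_top" using A.AA_lim unfolding AAe .
  note X = int_equiv[OF A.hh_nonneg A.hh_int B.hh_int H this]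
  show ?thesis unfolding AAe by (rule X)
qed


locale eqsetup = prob_space M for M :: "'a measure" +
  fixes F :: "real \<Rightarrow> real" and S :: "nat \<Rightarrow> 'a \<Rightarrow> real" and V :: "nat \<Rightarrow> 'a \<Rightarrow> 'v::euclidean_space"
  assumes F_pos: "F 0 = 0"
    and F_mean: "set_integrable lborel {0..} (\<lambda>s. 1 - F s)"
    and indS: "indep_vars (\<lambda>_. borel) S UNIV"
    and indV: "indep_vars (\<lambda>_. borel) V UNIV"
    and indSV: "indep_set
       (sigma_sets (space M) (\<Union>k. {S k -` A \<inter> space M | A. A \<in> sets borel}))
       (sigma_sets (space M) (\<Union>k. {V k -` B \<inter> space M | B. B \<in> sets borel}))"
    and cdfS: "\<And>k t. measure M {\<omega> \<in> space M. S (Suc k) \<omega> \<le> t} = F t"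
    and cdf0: "\<And>t. measure M {\<omega> \<in> space M. S 0 \<omega> \<le> t} = (LBINT s:{0..t}. 1 - F s) / mean_time F"
    and distV: "\<And>i. distr M borel (V i) = distr M borel (V 0)"
    and V_int: "integrable M (V 0)" and V_mean: "(\<integral>\<omega>. V 0 \<omega> \<partial>M) = 0"
    and V_sq: "integrable M (\<lambda>\<omega>. (norm (V 0 \<omega>))^2)"
begin

lemma S_meas[measurable]: "S k \<in> borel_measurable M"
  using indS unfolding indep_vars_def by auto

lemma V_meas[measurable]: "V k \<in> borel_measurable M"
  using indV unfolding indep_vars_def by auto

lemma F_prob: "F x = prob {\<omega> \<in> space M. S (Suc 0) \<omega> \<le> x}"
  using cdfS[of 0 x] by simp

lemma F_le1: "F x \<le> 1" unfolding F_prob by simp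
lemma F_nonneg: "0 \<le> F x" unfolding F_prob by simp
lemma F_mono: "x \<le> y \<Longrightarrow> F x \<le> F y"
  unfolding F_prob by (intro finite_measure_mono) auto
lemma F_neg: "x \<le> 0 \<Longrightarrow> F x = 0"
  using F_mono[of x 0] F_nonneg[of x] F_pos by simp

lemma meanF_nonneg: "0 \<le> mean_time F"
  unfolding mean_time_def set_lebesgue_integral_def using F_le1
  by (intro integral_nonneg_AE) (auto simp: indicator_def)

lemma meanF_pos: "0 < mean_time F"
proof (rule ccontr)
  assume "\<not> 0 < mean_time F"
  then have z: "mean_time F = 0" using meanF_nonneg by simp
  have "prob (\<Union>n. {\<omega> \<in> space M. S 0 \<omega> \<le> real n}) = 0"
    by (rule measure_countably_zero) (auto simp: cdf0 z)
  moreover have "(\<Union>n. {\<omega> \<in> space M. S 0 \<omega> \<le> real n}) = space M"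
    using real_arch_simple by auto
  ultimately show False using prob_space by simp
qed

lemma S_pos_each: "AE \<omega> in M. 0 < S k \<omega>"
proof -
  have "prob {\<omega> \<in> space M. S k \<omega> \<le> 0} = 0"
  proof (cases k)
    case 0
    have "(LBINT s:{0..0}. 1 - F s) = 0"
    proof -
      have "set_integrable lborel {0} (\<lambda>s. 1 - F s)"
        by (rule set_integrable_subset[OF F_mean]) auto
      then have "(LBINT s:{0}. 1 - F s) = 0"
        by (subst set_integral_at_point) auto
      then show ?thesis by simp
    qed
    then show ?thesis using 0 cdf0[of 0] by simp
  next
    case (Suc j) then show ?thesis using cdfS[of j 0] F_pos by simp
  qed
  then have "emeasure M {\<omega> \<in> space M. S k \<omega> \<le> 0} = 0"
    by (simp add: emeasure_eq_measure)
  then show ?thesis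
    by (subst AE_iff_measurable[where N="{\<omega> \<in> space M. S k \<omega> \<le> 0}"]) (auto simp: not_less)
qed

lemma S_pos: "AE \<omega> in M. \<forall>k. 0 < S k \<omega>"
  using S_pos_each by (simp add: AE_all_countable)

definition dens0 :: "real \<Rightarrow> ennreal" where
  "dens0 s = ennreal (indicator {0..} s * (1 - F s) / mean_time F)"

lemma F_meas[measurable]: "F \<in> borel_measurable borel"
proof -
  have "mono F" using F_mono by (auto simp: mono_def)
  then show ?thesis by (rule borel_measurable_mono)
qed

lemma dens0_meas[measurable]: "dens0 \<in> borel_measurable borel"
  unfolding dens0_def by measurable

lemma dens0_int: "(\<integral>\<^sup>+ s. dens0 s * indicator A s \<partial>lborel) = ennreal ((LBINT s:({0..} \<inter> A). 1 - F s) / mean_time F)"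
  if A: "A \<in> sets borel" for A
proof -
  have ii: "set_integrable lborel ({0..} \<inter> A) (\<lambda>s. 1 - F s)"
    by (rule set_integrable_subset[OF F_mean]) (use A in auto)
  have "(\<integral>\<^sup>+ s. dens0 s * indicator A s \<partial>lborel) =
        (\<integral>\<^sup>+ s. ennreal (indicator ({0..} \<inter> A) s * (1 - F s) / mean_time F) \<partial>lborel)"
    unfolding dens0_def by (intro nn_integral_cong) (auto simp: indicator_def)
  also have "\<dots> = ennreal (LBINT s. indicator ({0..} \<inter> A) s * (1 - F s) / mean_time F)"
    using ii F_le1 unfolding set_integrable_def
    by (intro nn_integral_eq_integral) (auto simp: indicator_def intro!: divide_nonneg_nonneg meanF_nonneg)
  also have "(LBINT s. indicator ({0..} \<inter> A) s * (1 - F s) / mean_time F) = (LBINT s:({0..} \<inter> A). 1 - F s) / mean_time F"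
    unfolding set_lebesgue_integral_def by simp
  finally show ?thesis .
qed

definition D0 where "D0 = density lborel dens0"

lemma D0_real_distribution: "real_distribution D0"
proof -
  have "emeasure D0 (space D0) = 1"
    unfolding D0_def using dens0_int[of UNIV] meanF_pos
    by (simp add: emeasure_density mean_time_def)
  then have "prob_space D0" by (rule prob_spaceI)
  then show ?thesis unfolding real_distribution_def real_distribution_axioms_def D0_def by simp
qed

lemma S0_distr: "distr M borel (S 0) = D0"
proof (rule cdf_unique)
  show "real_distribution (distr M borel (S 0))" by (rule real_distribution_distr) simp
  show "real_distribution D0" by (rule D0_real_distribution)
  show "cdf (distr M borel (S 0)) = cdf D0"
  proof
    fix x
    have "cdf (distr M borel (S 0)) x = prob {\<omega> \<in> space M. S 0 \<omega> \<le> x}"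
      unfolding cdf_def by (subst measure_distr) (auto intro!: arg_cong[where f=prob])
    also have "\<dots> = (LBINT s:{0..x}. 1 - F s) / mean_time F" by (rule cdf0)
    also have "\<dots> = cdf D0 x"
    proof -
      have "emeasure D0 {..x} = ennreal ((LBINT s:{0..x}. 1 - F s) / mean_time F)"
        unfolding D0_def using dens0_int[of "{..x}"]
        by (subst emeasure_density) (auto simp: nn_integral_set_ennreal mult.commute
            intro!: arg_cong[where f="\<lambda>A. ennreal (set_lebesgue_integral lborel A _ / _)"])
      moreover have "0 \<le> (LBINT s:{0..x}. 1 - F s) / mean_time F"
        using meanF_nonneg F_le1 by (intro divide_nonneg_nonneg setint_nonneg) auto
      ultimately show ?thesis unfolding cdf_def measure_def by simp
    qed
    finally show "cdf (distr M borel (S 0)) x = cdf D0 x" .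
  qed
qed

lemma S0_nn: "g \<in> borel_measurable borel \<Longrightarrow> (\<integral>\<^sup>+\<omega>. g (S 0 \<omega>) \<partial>M) = (\<integral>\<^sup>+ s. dens0 s * g s \<partial>lborel)"
proof -
  assume [measurable]: "g \<in> borel_measurable borel"
  have "(\<integral>\<^sup>+\<omega>. g (S 0 \<omega>) \<partial>M) = (\<integral>\<^sup>+ s. g s \<partial>distr M borel (S 0))"
    by (subst nn_integral_distr) auto
  also have "\<dots> = (\<integral>\<^sup>+ s. dens0 s * g s \<partial>lborel)"
    unfolding S0_distr D0_def by (subst nn_integral_density) auto
  finally show ?thesis .
qed

end

lemma (in prob_space) nn_swap:
  assumes "(\<lambda>(s, \<omega>). f s \<omega>) \<in> borel_measurable (lborel \<Otimes>\<^sub>M M)"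
  shows "(\<integral>\<^sup>+\<omega>. (\<integral>\<^sup>+s. f s \<omega> \<partial>lborel) \<partial>M) = (\<integral>\<^sup>+s. (\<integral>\<^sup>+\<omega>. f s \<omega> \<partial>M) \<partial>lborel)"
proof -
  interpret P: pair_sigma_finite lborel M by unfold_locales
  show ?thesis by (rule P.Fubini'[OF assms])
qed

lemma nn_sq_ico:
  assumes "0 \<le> a"
  shows "(\<integral>\<^sup>+ s. ennreal (2 * s) * indicator {0..<a} s \<partial>lborel) = ennreal (a\<^sup>2)"
proof -
  have "(\<integral>\<^sup>+ s. ennreal (2 * s) * indicator {0..<a} s \<partial>lborel) = (\<integral>\<^sup>+ s. ennreal (2 * s) * indicator {0..a} s \<partial>lborel)"
    by (intro nn_integral_cong_AE) (use AE_lborel_singleton[of a] in \<open>auto simp: indicator_def\<close>)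
  also have "\<dots> = ennreal (a\<^sup>2 - 0\<^sup>2)"
    by (rule nn_integral_FTC_Icc) (auto intro!: derivative_eq_intros simp: assms)
  finally show ?thesis by simp
qed

lemma (in prob_space) layer_cake_sq:
  assumes X[measurable]: "X \<in> borel_measurable M" and Xnn: "AE \<omega> in M. 0 \<le> X \<omega>" and c: "0 \<le> c"
  shows "(\<integral>\<^sup>+\<omega>. ennreal ((min (X \<omega>) c)\<^sup>2) \<partial>M)
       = (\<integral>\<^sup>+ s. ennreal (2 * s) * indicator {0..<c} s * ennreal (prob {\<omega> \<in> space M. s < X \<omega>}) \<partial>lborel)"
proof -
  have "(\<integral>\<^sup>+\<omega>. ennreal ((min (X \<omega>) c)\<^sup>2) \<partial>M)
      = (\<integral>\<^sup>+\<omega>. (\<integral>\<^sup>+s. ennreal (2 * s) * indicator {0..<c} s * indicator {..<X \<omega>} s \<partial>lborel) \<partial>M)"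
  proof (intro nn_integral_cong_AE, use Xnn in eventually_elim)
    case (elim \<omega>)
    have "(\<integral>\<^sup>+s. ennreal (2 * s) * indicator {0..<c} s * indicator {..<X \<omega>} s \<partial>lborel)
        = (\<integral>\<^sup>+s. ennreal (2 * s) * indicator {0..<min (X \<omega>) c} s \<partial>lborel)"
      by (intro nn_integral_cong) (auto simp: indicator_def)
    also have "\<dots> = ennreal ((min (X \<omega>) c)\<^sup>2)" using elim c by (intro nn_sq_ico) auto
    finally show ?case by simp
  qed
  also have "\<dots> = (\<integral>\<^sup>+\<omega>. (\<integral>\<^sup>+s. ennreal (2 * s) * indicator {0..<c} s * (if s < X \<omega> then 1 else 0) \<partial>lborel) \<partial>M)"
    by (intro nn_integral_cong) (auto simp: indicator_def)
  also have "\<dots> = (\<integral>\<^sup>+s. (\<integral>\<^sup>+\<omega>. ennreal (2 * s) * indicator {0..<c} s * (if s < X \<omega> then 1 else 0) \<partial>M) \<partial>lborel)"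
    by (rule nn_swap) measurable
  also have "\<dots> = (\<integral>\<^sup>+ s. ennreal (2 * s) * indicator {0..<c} s * ennreal (prob {\<omega> \<in> space M. s < X \<omega>}) \<partial>lborel)"
  proof (intro nn_integral_cong)
    fix s :: real
    have "(\<integral>\<^sup>+\<omega>. ennreal (2 * s) * indicator {0..<c} s * (if s < X \<omega> then 1 else 0) \<partial>M)
        = (\<integral>\<^sup>+\<omega>. ennreal (2 * s) * indicator {0..<c} s * indicator {\<omega> \<in> space M. s < X \<omega>} \<omega> \<partial>M)"
      by (intro nn_integral_cong) (auto simp: indicator_def)
    also have "\<dots> = ennreal (2 * s) * indicator {0..<c} s * emeasure M {\<omega> \<in> space M. s < X \<omega>}"
      by (subst nn_integral_cmult_indicator) auto
    finally show "(\<integral>\<^sup>+\<omega>. ennreal (2 * s) * indicator {0..<c} s * (if s < X \<omega> then 1 else 0) \<partial>M)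
        = ennreal (2 * s) * indicator {0..<c} s * ennreal (prob {\<omega> \<in> space M. s < X \<omega>})"
      by (simp add: emeasure_eq_measure)
  qed
  finally show ?thesis .
qed

context eqsetup begin

lemma prob_S_gt: "prob {\<omega> \<in> space M. s < S (Suc j) \<omega>} = 1 - F s"
proof -
  have "{\<omega> \<in> space M. s < S (Suc j) \<omega>} = space M - {\<omega> \<in> space M. S (Suc j) \<omega> \<le> s}" by auto
  then show ?thesis using cdfS[of j s] by (simp add: prob_compl)
qed

lemma prob_S0_gt: "prob {\<omega> \<in> space M. s < S 0 \<omega>} = 1 - Phi F s / mean_time F"
proof -
  have "{\<omega> \<in> space M. s < S 0 \<omega>} = space M - {\<omega> \<in> space M. S 0 \<omega> \<le> s}" by auto
  then show ?thesis using cdf0[of s] by (simp add: prob_compl Phi_def)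
qed

lemma E_L0:
  assumes "0 \<le> t"
  shows "(\<integral>\<^sup>+\<omega>. ennreal ((min (S 0 \<omega>) t)\<^sup>2) \<partial>M)
       = (\<integral>\<^sup>+ s. ennreal (2 * s * Gt F s / mean_time F) * indicator {0..<t} s \<partial>lborel)"
proof -
  have nn: "AE \<omega> in M. 0 \<le> S 0 \<omega>" using S_pos_each[of 0] by eventually_elim auto
  show ?thesis
    unfolding layer_cake_sq[OF S_meas nn assms] prob_S0_gt
  proof (intro nn_integral_cong)
    fix s :: real
    have "1 - Phi F s / mean_time F = Gt F s / mean_time F"
      using meanF_pos unfolding Gt_def by (simp add: field_simps)
    moreover have "0 \<le> Gt F s / mean_time F"
      using prob_S0_gt[of s] \<open>1 - Phi F s / mean_time F = Gt F s / mean_time F\<close> by (metis measure_nonneg)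
    ultimately show "ennreal (2 * s) * indicator {0..<t} s * ennreal (1 - Phi F s / mean_time F) =
         ennreal (2 * s * Gt F s / mean_time F) * indicator {0..<t} s"
      by (auto simp: indicator_def ennreal_mult[symmetric] mult.assoc)
  qed
qed

lemma E_Lsq:
  assumes "0 \<le> c"
  shows "(\<integral>\<^sup>+\<omega>. ennreal ((min (S (Suc j) \<omega>) c)\<^sup>2) \<partial>M)
       = (\<integral>\<^sup>+ s. ennreal (2 * s * (1 - F s)) * indicator {0..<c} s \<partial>lborel)"
proof -
  have nn: "AE \<omega> in M. 0 \<le> S (Suc j) \<omega>" using S_pos_each[of "Suc j"] by eventually_elim auto
  show ?thesis
    unfolding layer_cake_sq[OF S_meas nn assms] prob_S_gt
    using F_le1 by (intro nn_integral_cong) (auto simp: indicator_def ennreal_mult[symmetric])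
qed

lemma E_K_tau:
  assumes [measurable]: "k \<in> borel_measurable borel"
  shows "(\<integral>\<^sup>+\<omega>. (\<integral>\<^sup>+r. k r * indicator {..z - S (Suc j) \<omega>} r \<partial>lborel) \<partial>M)
       = (\<integral>\<^sup>+ r. k r * ennreal (F (z - r)) \<partial>lborel)"
proof -
  have "(\<integral>\<^sup>+\<omega>. (\<integral>\<^sup>+r. k r * indicator {..z - S (Suc j) \<omega>} r \<partial>lborel) \<partial>M)
      = (\<integral>\<^sup>+\<omega>. (\<integral>\<^sup>+r. k r * (if r \<le> z - S (Suc j) \<omega> then 1 else 0) \<partial>lborel) \<partial>M)"
    by (intro nn_integral_cong) (auto simp: indicator_def)
  also have "\<dots> = (\<integral>\<^sup>+r. (\<integral>\<^sup>+\<omega>. k r * (if r \<le> z - S (Suc j) \<omega> then 1 else 0) \<partial>M) \<partial>lborel)"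
    by (rule nn_swap) measurable
  also have "\<dots> = (\<integral>\<^sup>+ r. k r * ennreal (F (z - r)) \<partial>lborel)"
  proof (intro nn_integral_cong)
    fix r :: real
    have "(\<integral>\<^sup>+\<omega>. k r * (if r \<le> z - S (Suc j) \<omega> then 1 else 0) \<partial>M)
        = (\<integral>\<^sup>+\<omega>. k r * indicator {\<omega> \<in> space M. S (Suc j) \<omega> \<le> z - r} \<omega> \<partial>M)"
      by (intro nn_integral_cong) (auto simp: indicator_def)
    also have "\<dots> = k r * emeasure M {\<omega> \<in> space M. S (Suc j) \<omega> \<le> z - r}"
      by (subst nn_integral_cmult_indicator) auto
    finally show "(\<integral>\<^sup>+\<omega>. k r * (if r \<le> z - S (Suc j) \<omega> then 1 else 0) \<partial>M) = k r * ennreal (F (z - r))"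
      by (simp add: emeasure_eq_measure cdfS)
  qed
  finally show ?thesis .
qed

lemma E_k_S0:
  assumes [measurable]: "k \<in> borel_measurable borel"
  shows "ennreal (mean_time F) * (\<integral>\<^sup>+\<omega>. k (z - S 0 \<omega>) \<partial>M)
       = (\<integral>\<^sup>+ r. k r * ennreal (indicator {0..} (z - r) * (1 - F (z - r))) \<partial>lborel)"
proof -
  have "(\<integral>\<^sup>+\<omega>. k (z - S 0 \<omega>) \<partial>M) = (\<integral>\<^sup>+ s. dens0 s * k (z - s) \<partial>lborel)"
    by (rule S0_nn) measurable
  also have "\<dots> = (\<integral>\<^sup>+ r. dens0 (z + (-1) * r) * k (z - (z + (-1) * r)) \<partial>lborel)"
    by (subst nn_integral_real_affine[where c="-1" and t=z]) auto
  finally have "ennreal (mean_time F) * (\<integral>\<^sup>+\<omega>. k (z - S 0 \<omega>) \<partial>M)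
      = ennreal (mean_time F) * (\<integral>\<^sup>+ r. dens0 (z - r) * k r \<partial>lborel)" by simp
  also have "\<dots> = (\<integral>\<^sup>+ r. ennreal (mean_time F) * (dens0 (z - r) * k r) \<partial>lborel)"
    by (subst nn_integral_cmult) auto
  also have "\<dots> = (\<integral>\<^sup>+ r. k r * ennreal (indicator {0..} (z - r) * (1 - F (z - r))) \<partial>lborel)"
  proof (intro nn_integral_cong)
    fix r
    have "ennreal (mean_time F) * dens0 (z - r) = ennreal (indicator {0..} (z - r) * (1 - F (z - r)))"
      unfolding dens0_def using meanF_pos F_le1
      by (subst ennreal_mult[symmetric]) (auto simp: indicator_def)
    then show "ennreal (mean_time F) * (dens0 (z - r) * k r) = k r * ennreal (indicator {0..} (z - r) * (1 - F (z - r)))"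
      by (metis mult.assoc mult.commute)
  qed
  finally show ?thesis .
qed

definition KK :: "(real \<Rightarrow> ennreal) \<Rightarrow> real \<Rightarrow> ennreal" where
  "KK k z = (\<integral>\<^sup>+r. k r * indicator {..z} r \<partial>lborel)"

lemma renewal_step:
  assumes [measurable]: "k \<in> borel_measurable borel"
  shows "KK k z = ennreal (mean_time F) * (\<integral>\<^sup>+\<omega>. k (z - S 0 \<omega>) \<partial>M)
            + (\<integral>\<^sup>+\<omega>. KK k (z - S (Suc j) \<omega>) \<partial>M)"
proof -
  have "ennreal (mean_time F) * (\<integral>\<^sup>+\<omega>. k (z - S 0 \<omega>) \<partial>M) + (\<integral>\<^sup>+\<omega>. KK k (z - S (Suc j) \<omega>) \<partial>M)
     = (\<integral>\<^sup>+ r. k r * ennreal (indicator {0..} (z - r) * (1 - F (z - r))) \<partial>lborel)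
       + (\<integral>\<^sup>+ r. k r * ennreal (F (z - r)) \<partial>lborel)"
    unfolding E_k_S0[OF assms] KK_def E_K_tau[OF assms] ..
  also have "\<dots> = (\<integral>\<^sup>+ r. k r * ennreal (indicator {0..} (z - r) * (1 - F (z - r))) + k r * ennreal (F (z - r)) \<partial>lborel)"
    by (subst nn_integral_add) auto
  also have "\<dots> = KK k z"
    unfolding KK_def
  proof (intro nn_integral_cong)
    fix r
    show "k r * ennreal (indicator {0..} (z - r) * (1 - F (z - r))) + k r * ennreal (F (z - r)) = k r * indicator {..z} r"
    proof (cases "r \<le> z")
      case True
      then have "ennreal (indicator {0..} (z - r) * (1 - F (z - r))) + ennreal (F (z - r)) = 1"
        using F_le1[of "z - r"] F_nonneg[of "z - r"]
        by (subst ennreal_plus[symmetric]) (auto simp: indicator_def)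
      then show ?thesis using True by (metis distrib_left indicator_simps(1) atMost_iff mult.right_neutral)
    next
      case False
      then show ?thesis using F_neg[of "z - r"] by (simp add: indicator_def)
    qed
  qed
  finally show ?thesis by simp
qed

end

lemma (in prob_space) indep_nn:
  assumes ind: "indep_var borel X borel Y"
    and h[measurable]: "(\<lambda>(x, y). h x y) \<in> borel_measurable (borel \<Otimes>\<^sub>M borel)"
  shows "(\<integral>\<^sup>+\<omega>. h (X \<omega>) (Y \<omega>) \<partial>M) = (\<integral>\<^sup>+\<omega>. (\<integral>\<^sup>+\<omega>'. h (X \<omega>) (Y \<omega>') \<partial>M) \<partial>M)"
proof -
  have X[measurable]: "X \<in> borel_measurable M" and Y[measurable]: "Y \<in> borel_measurable M"
    and eq: "distr M borel X \<Otimes>\<^sub>M distr M borel Y = distr M (borel \<Otimes>\<^sub>M borel) (\<lambda>x. (X x, Y x))"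
    using ind unfolding indep_var_distribution_eq by auto
  interpret DY: prob_space "distr M borel Y" by (rule prob_space_distr) simp
  have "(\<integral>\<^sup>+\<omega>. h (X \<omega>) (Y \<omega>) \<partial>M) = (\<integral>\<^sup>+p. (\<lambda>(x, y). h x y) p \<partial>distr M (borel \<Otimes>\<^sub>M borel) (\<lambda>x. (X x, Y x)))"
    by (subst nn_integral_distr) auto
  also have "\<dots> = (\<integral>\<^sup>+p. (\<lambda>(x, y). h x y) p \<partial>(distr M borel X \<Otimes>\<^sub>M distr M borel Y))"
    unfolding eq ..
  also have "\<dots> = (\<integral>\<^sup>+x. (\<integral>\<^sup>+y. h x y \<partial>distr M borel Y) \<partial>distr M borel X)"
    by (subst DY.nn_integral_fst[symmetric]) auto
  also have "\<dots> = (\<integral>\<^sup>+\<omega>. (\<integral>\<^sup>+y. h (X \<omega>) y \<partial>distr M borel Y) \<partial>M)"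
  proof -
    have "(\<lambda>x. \<integral>\<^sup>+y. (\<lambda>(x, y). h x y) (x, y) \<partial>distr M borel Y) \<in> borel_measurable borel"
      by (rule DY.borel_measurable_nn_integral_fst) simp
    then show ?thesis by (subst nn_integral_distr) auto
  qed
  also have "\<dots> = (\<integral>\<^sup>+\<omega>. (\<integral>\<^sup>+\<omega>'. h (X \<omega>) (Y \<omega>') \<partial>M) \<partial>M)"
    by (intro nn_integral_cong) (subst nn_integral_distr, auto)
  finally show ?thesis .
qed

context eqsetup begin

lemma indep_sums:
  assumes dj: "J1 \<inter> J2 = {}" and fin: "finite J1" "finite J2"
  shows "indep_var borel (\<lambda>\<omega>. \<Sum>k\<in>J1. S k \<omega>) borel (\<lambda>\<omega>. \<Sum>k\<in>J2. S k \<omega>)"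
proof -
  define K where "K = (\<lambda>b. if b then J1 else J2)"
  have "indep_vars (\<lambda>j. Pi\<^sub>M (K j) (\<lambda>_. borel)) (\<lambda>j \<omega>. \<lambda>i\<in>K j. S i \<omega>) UNIV"
    by (rule indep_vars_restrict[OF indS]) (use dj in \<open>auto simp: K_def disjoint_family_on_def\<close>)
  moreover have "(\<lambda>j. Pi\<^sub>M (K j) (\<lambda>_. borel)) = case_bool (Pi\<^sub>M J1 (\<lambda>_. borel)) (Pi\<^sub>M J2 (\<lambda>_. borel :: real measure))"
    by (rule ext) (simp add: K_def split: bool.split)
  moreover have "(\<lambda>j \<omega>. \<lambda>i\<in>K j. S i \<omega>) = case_bool (\<lambda>\<omega>. \<lambda>i\<in>J1. S i \<omega>) (\<lambda>\<omega>. \<lambda>i\<in>J2. S i \<omega>)"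
    by (rule ext) (simp add: K_def split: bool.split)
  ultimately have "indep_var (Pi\<^sub>M J1 (\<lambda>_. borel)) (\<lambda>\<omega>. \<lambda>i\<in>J1. S i \<omega>) (Pi\<^sub>M J2 (\<lambda>_. borel)) (\<lambda>\<omega>. \<lambda>i\<in>J2. S i \<omega>)"
    unfolding indep_var_def by simp
  then have "indep_var borel ((\<lambda>x. \<Sum>k\<in>J1. x k) \<circ> (\<lambda>\<omega>. \<lambda>i\<in>J1. S i \<omega>)) borel ((\<lambda>x. \<Sum>k\<in>J2. x k) \<circ> (\<lambda>\<omega>. \<lambda>i\<in>J2. S i \<omega>))"
    by (rule indep_var_compose) measurable
  then show ?thesis by (simp add: comp_def)
qed

definition sig :: "nat \<Rightarrow> 'a \<Rightarrow> real" where
  "sig n \<omega> = (\<Sum>k\<in>{1..n}. S k \<omega>)"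

abbreviation TT :: "nat \<Rightarrow> 'a \<Rightarrow> real" where
  "TT n \<equiv> renewal_epoch S n"

lemma sig_meas[measurable]: "sig n \<in> borel_measurable M"
  unfolding sig_def by measurable

lemma TT_meas[measurable]: "TT n \<in> borel_measurable M"
  unfolding renewal_epoch_def[abs_def] by measurable

lemma TT_sig: "TT n \<omega> = S 0 \<omega> + sig n \<omega>"
proof -
  have "{..n} = insert 0 {1..n}" by auto
  then show ?thesis unfolding renewal_epoch_def sig_def by simp
qed

lemma sig_Suc: "sig (Suc n) \<omega> = sig n \<omega> + S (Suc n) \<omega>"
  unfolding sig_def by simp

lemma TT_Suc: "TT (Suc n) \<omega> = TT n \<omega> + S (Suc n) \<omega>"
  unfolding renewal_epoch_def by simp

lemma indep_sig_S0: "indep_var borel (sig n) borel (S 0)"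
  using indep_sums[of "{1..n}" "{0}"] unfolding sig_def[abs_def] by simp

lemma indep_sig_S: "indep_var borel (sig n) borel (S (Suc n))"
  using indep_sums[of "{1..n}" "{Suc n}"] unfolding sig_def[abs_def] by simp

lemma indep_TT_S: "indep_var borel (TT n) borel (S (Suc n))"
  using indep_sums[of "{..n}" "{Suc n}"] unfolding renewal_epoch_def[abs_def] by simp

lemma KK_alt: "KK k z = (\<integral>\<^sup>+r. k r * (if r \<le> z then 1 else 0) \<partial>lborel)"
  unfolding KK_def by (intro nn_integral_cong) (auto simp: indicator_def)

lemma KK_meas[measurable]:
  assumes [measurable]: "k \<in> borel_measurable borel"
  shows "KK k \<in> borel_measurable borel"
proof -
  have "(\<lambda>z. \<integral>\<^sup>+r. (\<lambda>(z, r). k r * (if r \<le> z then 1 else 0)) (z, r) \<partial>lborel) \<in> borel_measurable borel"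
    by (rule lborel.borel_measurable_nn_integral_fst) measurable
  then show ?thesis unfolding KK_alt[abs_def] by simp
qed

lemma renewal_iter:
  assumes k[measurable]: "k \<in> borel_measurable borel"
  shows "KK k z = ennreal (mean_time F) * (\<Sum>i<n. \<integral>\<^sup>+\<omega>. k (z - TT i \<omega>) \<partial>M)
                 + (\<integral>\<^sup>+\<omega>. KK k (z - sig n \<omega>) \<partial>M)"
proof (induction n)
  case 0
  then show ?case by (simp add: sig_def emeasure_space_1)
next
  case (Suc n)
  define A where "A \<omega> = (\<integral>\<^sup>+\<omega>'. k (z - sig n \<omega> - S 0 \<omega>') \<partial>M)" for \<omega>
  define B where "B \<omega> = (\<integral>\<^sup>+\<omega>'. KK k (z - sig n \<omega> - S (Suc n) \<omega>') \<partial>M)" for \<omega>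
  have A_meas[measurable]: "A \<in> borel_measurable M"
  proof -
    have "(\<lambda>\<omega>. \<integral>\<^sup>+\<omega>'. (\<lambda>(\<omega>, \<omega>'). k (z - sig n \<omega> - S 0 \<omega>')) (\<omega>, \<omega>') \<partial>M) \<in> borel_measurable M"
      by (rule borel_measurable_nn_integral_fst) measurable
    then show ?thesis unfolding A_def by simp
  qed
  have B_meas[measurable]: "B \<in> borel_measurable M"
  proof -
    have "(\<lambda>\<omega>. \<integral>\<^sup>+\<omega>'. (\<lambda>(\<omega>, \<omega>'). KK k (z - sig n \<omega> - S (Suc n) \<omega>')) (\<omega>, \<omega>') \<partial>M) \<in> borel_measurable M"
      by (rule borel_measurable_nn_integral_fst) measurable
    then show ?thesis unfolding B_def by simp
  qed
  have "(\<integral>\<^sup>+\<omega>. KK k (z - sig n \<omega>) \<partial>M) = (\<integral>\<^sup>+\<omega>. ennreal (mean_time F) * A \<omega> + B \<omega> \<partial>M)"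
    unfolding A_def B_def
    by (intro nn_integral_cong) (rule renewal_step[OF k])
  also have "\<dots> = ennreal (mean_time F) * (\<integral>\<^sup>+\<omega>. A \<omega> \<partial>M) + (\<integral>\<^sup>+\<omega>. B \<omega> \<partial>M)"
    by (subst nn_integral_add) (auto simp: nn_integral_cmult)
  also have "(\<integral>\<^sup>+\<omega>. A \<omega> \<partial>M) = (\<integral>\<^sup>+\<omega>. k (z - TT n \<omega>) \<partial>M)"
  proof -
    have "(\<integral>\<^sup>+\<omega>. k (z - sig n \<omega> - S 0 \<omega>) \<partial>M) = (\<integral>\<^sup>+\<omega>. A \<omega> \<partial>M)"
      unfolding A_def
      by (rule indep_nn[OF indep_sig_S0, where h="\<lambda>x y. k (z - x - y)"]) measurable
    then show ?thesis by (simp add: TT_sig algebra_simps)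
  qed
  also have "(\<integral>\<^sup>+\<omega>. B \<omega> \<partial>M) = (\<integral>\<^sup>+\<omega>. KK k (z - sig (Suc n) \<omega>) \<partial>M)"
  proof -
    have "(\<integral>\<^sup>+\<omega>. KK k (z - sig n \<omega> - S (Suc n) \<omega>) \<partial>M) = (\<integral>\<^sup>+\<omega>. B \<omega> \<partial>M)"
      unfolding B_def
      by (rule indep_nn[OF indep_sig_S, where h="\<lambda>x y. KK k (z - x - y)"]) measurable
    then show ?thesis by (simp add: sig_Suc algebra_simps)
  qed
  finally show ?case using Suc.IH by (simp add: algebra_simps distrib_left)
qed

end

context eqsetup begin

lemma TT_mono_AE: "AE \<omega> in M. \<forall>m n. m \<le> n \<longrightarrow> TT m \<omega> \<le> TT n \<omega>"
  using S_pos
proof eventually_elim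
  case (elim \<omega>)
  show ?case
  proof (intro allI impI)
    fix m n :: nat assume mn: "m \<le> n"
    have step: "TT i \<omega> \<le> TT (Suc i) \<omega>" for i using elim[rule_format, of "Suc i"] by (simp add: TT_Suc)
    show "TT m \<omega> \<le> TT n \<omega>"
      by (rule lift_Suc_mono_le[of "\<lambda>n. TT n \<omega>", OF step mn])
  qed
qed

lemma TT_unbounded_one: "AE \<omega> in M. \<exists>n. z < TT n \<omega>"
proof (cases "z < 0")
  case True
  show ?thesis using S_pos
  proof eventually_elim
    case (elim \<omega>) then show ?case using True by (intro exI[of _ 0]) (auto simp: renewal_epoch_def intro: less_trans)
  qed
next
  case False
  then have z: "0 \<le> z" by simp
  define k :: "real \<Rightarrow> ennreal" where "k = indicator {0..}"
  have k[measurable]: "k \<in> borel_measurable borel" unfolding k_def by measurable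
  have KKz: "KK k z = ennreal z"
  proof -
    have "(\<lambda>r. k r * indicator {..z} r) = indicator {0..z}"
      by (auto simp: k_def indicator_def fun_eq_iff)
    then have "KK k z = emeasure lborel {0..z}"
      unfolding KK_def by simp
    then show ?thesis using z by simp
  qed
  define B where "B = {\<omega> \<in> space M. \<forall>n. TT n \<omega> \<le> z}"
  have B[measurable]: "B \<in> sets M" unfolding B_def by measurable
  have Ek: "(\<integral>\<^sup>+\<omega>. k (z - TT i \<omega>) \<partial>M) = ennreal (prob {\<omega> \<in> space M. TT i \<omega> \<le> z})" for i
  proof -
    have "(\<integral>\<^sup>+\<omega>. k (z - TT i \<omega>) \<partial>M) = (\<integral>\<^sup>+\<omega>. indicator {\<omega> \<in> space M. TT i \<omega> \<le> z} \<omega> \<partial>M)"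
      unfolding k_def by (intro nn_integral_cong) (auto simp: indicator_def)
    then show ?thesis by (simp add: emeasure_eq_measure)
  qed
  have bound: "mean_time F * (real n * prob B) \<le> z" for n
  proof -
    have "ennreal (mean_time F) * (\<Sum>i<n. \<integral>\<^sup>+\<omega>. k (z - TT i \<omega>) \<partial>M) \<le> KK k z"
      using renewal_iter[OF k, of z n] by (simp add: le_iff_add)
    then have "ennreal (mean_time F * (\<Sum>i<n. prob {\<omega> \<in> space M. TT i \<omega> \<le> z})) \<le> ennreal z"
      unfolding Ek KKz using meanF_nonneg
      by (simp add: ennreal_mult sum_nonneg flip: sum_ennreal)
    then have "mean_time F * (\<Sum>i<n. prob {\<omega> \<in> space M. TT i \<omega> \<le> z}) \<le> z"
      using z by (simp add: ennreal_le_iff)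
    moreover have "real n * prob B \<le> (\<Sum>i<n. prob {\<omega> \<in> space M. TT i \<omega> \<le> z})"
    proof -
      have "(\<Sum>i<n. prob B) \<le> (\<Sum>i<n. prob {\<omega> \<in> space M. TT i \<omega> \<le> z})"
        by (intro sum_mono finite_measure_mono) (auto simp: B_def)
      then show ?thesis by simp
    qed
    ultimately show ?thesis using meanF_pos
      by (meson dual_order.trans mult_left_mono less_imp_le)
  qed
  have "prob B = 0"
  proof (rule ccontr)
    assume "prob B \<noteq> 0"
    then have pB: "prob B > 0" using measure_nonneg[of M B] by linarith
    obtain n :: nat where n: "z / (mean_time F * prob B) < real n" using reals_Archimedean2 by blast
    then have "z < real n * (mean_time F * prob B)" using pB meanF_pos by (simp add: field_simps)
    then show False using bound[of n] by (simp add: algebra_simps)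
  qed
  then have "emeasure M B = 0" by (simp add: emeasure_eq_measure)
  then show ?thesis
    by (subst AE_iff_measurable[where N=B]) (auto simp: B_def not_le, meson not_le, meson not_le)
qed

lemma TT_unbounded: "AE \<omega> in M. \<forall>m::nat. \<exists>n. real m < TT n \<omega>"
  using TT_unbounded_one by (simp add: AE_all_countable)

lemma sig_tendsto_AE: "AE \<omega> in M. \<forall>y. \<exists>N. \<forall>n\<ge>N. y < sig n \<omega>"
  using TT_unbounded TT_mono_AE
proof eventually_elim
  case (elim \<omega>)
  show ?case
  proof
    fix y
    obtain m :: nat where m: "y + S 0 \<omega> < real m" using reals_Archimedean2 by blast
    obtain N where N: "real m < TT N \<omega>" using elim(1) by blast
    show "\<exists>N. \<forall>n\<ge>N. y < sig n \<omega>"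
    proof (intro exI allI impI)
      fix n assume "N \<le> n"
      then have "TT N \<omega> \<le> TT n \<omega>" using elim(2) by blast
      then show "y < sig n \<omega>" using m N TT_sig[of n \<omega>] by linarith
    qed
  qed
qed

lemma sig_mono_AE: "AE \<omega> in M. \<forall>n. sig n \<omega> \<le> sig (Suc n) \<omega>"
  using S_pos by eventually_elim (auto simp: sig_Suc less_imp_le)

lemma KK_mono: "x \<le> y \<Longrightarrow> KK k x \<le> KK k y"
  unfolding KK_def by (intro nn_integral_mono) (auto simp: indicator_def)

lemma renewal_lim:
  assumes k[measurable]: "k \<in> borel_measurable borel"
    and k0: "\<And>r. r < 0 \<Longrightarrow> k r = 0"
    and fin: "KK k z < \<infinity>"
  shows "ennreal (mean_time F) * (\<Sum>i. \<integral>\<^sup>+\<omega>. k (z - TT i \<omega>) \<partial>M) = KK k z"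
proof (rule antisym)
  define a where "a i = (\<integral>\<^sup>+\<omega>. k (z - TT i \<omega>) \<partial>M)" for i
  define b where "b n = (\<integral>\<^sup>+\<omega>. KK k (z - sig n \<omega>) \<partial>M)" for n
  have it: "KK k z = ennreal (mean_time F) * (\<Sum>i<n. a i) + b n" for n
    unfolding a_def b_def by (rule renewal_iter[OF k])
  show "ennreal (mean_time F) * (\<Sum>i. a i) \<le> KK k z"
    unfolding suminf_eq_SUP SUP_mult_left_ennreal
  proof (rule SUP_least)
    fix n show "ennreal (mean_time F) * (\<Sum>i<n. a i) \<le> KK k z"
      using it[of n] by (simp add: le_iff_add)
  qed
  have "(INF n. b n) = (\<integral>\<^sup>+\<omega>. (INF n. KK k (z - sig n \<omega>)) \<partial>M)"
    unfolding b_def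
  proof (rule nn_integral_monotone_convergence_INF_AE'[symmetric])
    show "AE \<omega> in M. KK k (z - sig (Suc n) \<omega>) \<le> KK k (z - sig n \<omega>)" for n
      using sig_mono_AE by eventually_elim (auto intro!: KK_mono)
    show "(\<lambda>\<omega>. KK k (z - sig n \<omega>)) \<in> borel_measurable M" for n by measurable
    show "(\<integral>\<^sup>+\<omega>. KK k (z - sig 0 \<omega>) \<partial>M) < \<infinity>"
      using fin by (simp add: sig_def emeasure_space_1)
  qed
  also have "\<dots> = (\<integral>\<^sup>+\<omega>. 0 \<partial>M)"
  proof (rule nn_integral_cong_AE)
    show "AE \<omega> in M. (INF n. KK k (z - sig n \<omega>)) = 0"
      using sig_tendsto_AE
    proof eventually_elim
      case (elim \<omega>)
      then obtain N where N: "z < sig N \<omega>" by blast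
      have "KK k (z - sig N \<omega>) = 0"
        unfolding KK_def using N
        by (subst nn_integral_0_iff_AE) (auto simp: indicator_def k0)
      then have "(INF n. KK k (z - sig n \<omega>)) \<le> 0" by (metis INF_lower UNIV_I)
      then show ?case by simp
    qed
  qed
  finally have binf: "(INF n. b n) = 0" by simp
  have "KK k z \<le> ennreal (mean_time F) * (\<Sum>i. a i) + b n" for n
  proof -
    have "(\<Sum>i<n. a i) \<le> (\<Sum>i. a i)" by (rule sum_le_suminf) auto
    then have "ennreal (mean_time F) * (\<Sum>i<n. a i) \<le> ennreal (mean_time F) * (\<Sum>i. a i)"
      by (rule mult_left_mono) simp
    then show ?thesis using it[of n] by (metis add_right_mono)
  qed
  then have "KK k z \<le> (INF n. ennreal (mean_time F) * (\<Sum>i. a i) + b n)"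
    by (rule INF_greatest)
  also have "\<dots> = ennreal (mean_time F) * (\<Sum>i. a i)"
    using INF_ennreal_const_add[of "ennreal (mean_time F) * (\<Sum>i. a i)" b] binf by simp
  finally show "KK k z \<le> ennreal (mean_time F) * (\<Sum>i. \<integral>\<^sup>+\<omega>. k (z - TT i \<omega>) \<partial>M)"
    unfolding a_def .
qed

end

context eqsetup begin

definition LL :: "real \<Rightarrow> nat \<Rightarrow> 'a \<Rightarrow> real" where
  "LL t i \<omega> = min t (TT i \<omega>) - (case i of 0 \<Rightarrow> 0 | Suc j \<Rightarrow> min t (TT j \<omega>))"

lemma LL_meas[measurable]: "LL t i \<in> borel_measurable M"
  unfolding LL_def by (cases i) simp_all

definition kW :: "real \<Rightarrow> ennreal" where
  "kW y = (\<integral>\<^sup>+ s. ennreal (2 * s * (1 - F s)) * indicator {0..<y} s \<partial>lborel)"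

lemma kW_alt: "kW y = (\<integral>\<^sup>+ s. ennreal (2 * s * (1 - F s)) * (if 0 \<le> s \<and> s < y then 1 else 0) \<partial>lborel)"
  unfolding kW_def by (intro nn_integral_cong) (auto simp: indicator_def)

lemma kW_meas[measurable]: "kW \<in> borel_measurable borel"
proof -
  have "(\<lambda>y. \<integral>\<^sup>+s. (\<lambda>(y, s). ennreal (2 * s * (1 - F s)) * (if 0 \<le> s \<and> s < y then 1 else 0)) (y, s) \<partial>lborel) \<in> borel_measurable borel"
    by (rule lborel.borel_measurable_nn_integral_fst) measurable
  then show ?thesis unfolding kW_alt[abs_def] by simp
qed

lemma kW_neg: "r < 0 \<Longrightarrow> kW r = 0"
  unfolding kW_def by (subst nn_integral_0_iff_AE) (auto simp: indicator_def)

lemma kW_le: "kW r \<le> ennreal (r\<^sup>2)"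
proof (cases "0 \<le> r")
  case True
  have "kW r \<le> (\<integral>\<^sup>+ s. ennreal (2 * s) * indicator {0..<r} s \<partial>lborel)"
    unfolding kW_def using F_nonneg
    by (intro nn_integral_mono) (auto simp: indicator_def intro!: ennreal_leI mult_left_le)
  also have "\<dots> = ennreal (r\<^sup>2)" by (rule nn_sq_ico[OF True])
  finally show ?thesis .
qed (simp add: kW_neg)

lemma KK_kW_fin: assumes "0 \<le> t" shows "KK kW t < \<infinity>"
proof -
  have "KK kW t \<le> (\<integral>\<^sup>+ r. ennreal (t\<^sup>2) * indicator {0..t} r \<partial>lborel)"
    unfolding KK_def
  proof (intro nn_integral_mono)
    fix r
    show "kW r * indicator {..t} r \<le> ennreal (t\<^sup>2) * indicator {0..t} r"
    proof (cases "0 \<le> r \<and> r \<le> t")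
      case True
      then have "r\<^sup>2 \<le> t\<^sup>2" by (intro power_mono) auto
      then have "kW r \<le> ennreal (t\<^sup>2)" using kW_le[of r] by (meson ennreal_leI order_trans)
      then show ?thesis using True by (simp add: indicator_def)
    qed (auto simp: indicator_def kW_neg)
  qed
  also have "\<dots> = ennreal (t\<^sup>2) * ennreal t" using assms by (simp add: nn_integral_cmult_indicator)
  also have "\<dots> < \<infinity>" by (simp add: ennreal_mult_less_top)
  finally show ?thesis .
qed

lemma Phi_mono_s: "mono (Phi F)"
proof (rule monoI)
  fix x y :: real assume xy: "x \<le> y"
  have i: "set_integrable lborel {0..z} (\<lambda>s. 1 - F s)" for z
    by (rule set_integrable_subset[OF F_mean]) auto
  show "Phi F x \<le> Phi F y"
    unfolding Phi_def set_lebesgue_integral_def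
    using i[of x] i[of y] xy F_le1 unfolding set_integrable_def
    by (intro integral_mono) (auto simp: indicator_def)
qed

lemma Gt_meas[measurable]: "Gt F \<in> borel_measurable borel"
proof -
  have [measurable]: "Phi F \<in> borel_measurable borel" by (rule borel_measurable_mono[OF Phi_mono_s])
  show ?thesis unfolding Gt_def[abs_def] by measurable
qed

lemma LL0: "LL t 0 \<omega> = min t (S 0 \<omega>)"
  unfolding LL_def renewal_epoch_def by simp

lemma LL_Suc_AE: "AE \<omega> in M. LL t (Suc j) \<omega> = min (S (Suc j) \<omega>) (max (t - TT j \<omega>) 0)"
  using S_pos_each[of "Suc j"] by eventually_elim (auto simp: LL_def TT_Suc min_def max_def)

lemma E_LL0: assumes "0 \<le> t"
  shows "ennreal (mean_time F) * (\<integral>\<^sup>+\<omega>. ennreal ((LL t 0 \<omega>)\<^sup>2) \<partial>M)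
      = (\<integral>\<^sup>+ s. ennreal (2 * s * Gt F s) * indicator {0..<t} s \<partial>lborel)"
proof -
  have "(\<integral>\<^sup>+\<omega>. ennreal ((LL t 0 \<omega>)\<^sup>2) \<partial>M) = (\<integral>\<^sup>+\<omega>. ennreal ((min (S 0 \<omega>) t)\<^sup>2) \<partial>M)"
    unfolding LL0 by (simp add: min.commute)
  also have "\<dots> = (\<integral>\<^sup>+ s. ennreal (2 * s * Gt F s / mean_time F) * indicator {0..<t} s \<partial>lborel)"
    by (rule E_L0[OF assms])
  finally have "ennreal (mean_time F) * (\<integral>\<^sup>+\<omega>. ennreal ((LL t 0 \<omega>)\<^sup>2) \<partial>M)
     = ennreal (mean_time F) * (\<integral>\<^sup>+ s. ennreal (2 * s * Gt F s / mean_time F) * indicator {0..<t} s \<partial>lborel)"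
    by simp
  also have "\<dots> = (\<integral>\<^sup>+ s. ennreal (mean_time F) * (ennreal (2 * s * Gt F s / mean_time F) * indicator {0..<t} s) \<partial>lborel)"
    by (rule nn_integral_cmult[symmetric]) measurable
  also have "\<dots> = (\<integral>\<^sup>+ s. ennreal (2 * s * Gt F s) * indicator {0..<t} s \<partial>lborel)"
  proof (intro nn_integral_cong)
    fix s
    have "ennreal (mean_time F) * ennreal (2 * s * Gt F s / mean_time F) = ennreal (2 * s * Gt F s)"
    proof (cases "0 \<le> 2 * s * Gt F s")
      case True then show ?thesis using meanF_pos by (subst ennreal_mult[symmetric]) auto
    next
      case False
      then have "2 * s * Gt F s / mean_time F \<le> 0" using meanF_pos by (simp add: divide_nonpos_pos)
      moreover have "2 * s * Gt F s \<le> 0" using False by simp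
      ultimately show ?thesis by (simp add: ennreal_neg)
    qed
    then show "ennreal (mean_time F) * (ennreal (2 * s * Gt F s / mean_time F) * indicator {0..<t} s) =
         ennreal (2 * s * Gt F s) * indicator {0..<t} s" by (simp add: mult.assoc[symmetric])
  qed
  finally show ?thesis .
qed

lemma E_LL_Suc:
  "(\<integral>\<^sup>+\<omega>. ennreal ((LL t (Suc j) \<omega>)\<^sup>2) \<partial>M) = (\<integral>\<^sup>+\<omega>. kW (t - TT j \<omega>) \<partial>M)"
proof -
  have "(\<integral>\<^sup>+\<omega>. ennreal ((LL t (Suc j) \<omega>)\<^sup>2) \<partial>M)
      = (\<integral>\<^sup>+\<omega>. ennreal ((min (S (Suc j) \<omega>) (max (t - TT j \<omega>) 0))\<^sup>2) \<partial>M)"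
    by (intro nn_integral_cong_AE) (use LL_Suc_AE[of t j] in eventually_elim, simp)
  also have "\<dots> = (\<integral>\<^sup>+\<omega>. (\<integral>\<^sup>+\<omega>'. ennreal ((min (S (Suc j) \<omega>') (max (t - TT j \<omega>) 0))\<^sup>2) \<partial>M) \<partial>M)"
    by (rule indep_nn[OF indep_TT_S, where h="\<lambda>x y. ennreal ((min y (max (t - x) 0))\<^sup>2)"]) measurable
  also have "\<dots> = (\<integral>\<^sup>+\<omega>. kW (t - TT j \<omega>) \<partial>M)"
  proof (intro nn_integral_cong)
    fix \<omega>
    show "(\<integral>\<^sup>+\<omega>'. ennreal ((min (S (Suc j) \<omega>') (max (t - TT j \<omega>) 0))\<^sup>2) \<partial>M) = kW (t - TT j \<omega>)"
      unfolding E_Lsq[of "max (t - TT j \<omega>) 0" j, simplified] kW_def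
      by (intro nn_integral_cong) (auto simp: indicator_def)
  qed
  finally show ?thesis .
qed

lemma kW_eq: assumes "Fprops F" "0 \<le> r" shows "kW r = ennreal (WW F r)"
proof -
  interpret Fprops F by fact
  have ii: "set_integrable lborel {0..r} (\<lambda>u. 2 * u * (1 - F u))"
    by (rule borel_integrable_atLeastAtMost', rule continuous_on_subset[OF cont2], simp)
  have "kW r = (\<integral>\<^sup>+ s. ennreal (indicator {0..r} s * (2 * s * (1 - F s))) \<partial>lborel)"
    unfolding kW_def
    by (intro nn_integral_cong_AE) (use AE_lborel_singleton[of r] in \<open>auto simp: indicator_def\<close>)
  also have "\<dots> = ennreal (WW F r)"
    unfolding WW_def set_lebesgue_integral_def using ii unfolding set_integrable_def
    by (subst nn_integral_eq_integral) (auto simp: indicator_def intro!: mult_nonneg_nonneg F_le1)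
  finally show ?thesis .
qed

lemma sum_LL:
  assumes FP: "Fprops F" and t: "0 \<le> t"
  shows "ennreal (mean_time F) * (\<Sum>i. \<integral>\<^sup>+\<omega>. ennreal ((LL t i \<omega>)\<^sup>2) \<partial>M) = ennreal (AA F t)"
proof -
  interpret FP: Fprops F by fact
  define a where "a i = (\<integral>\<^sup>+\<omega>. ennreal ((LL t i \<omega>)\<^sup>2) \<partial>M)" for i
  have "(\<Sum>i. a i) = (\<Sum>j. a (j + 1)) + (\<Sum>j<1. a j)"
    by (rule suminf_offset) simp
  then have sp: "(\<Sum>i. a i) = a 0 + (\<Sum>j. \<integral>\<^sup>+\<omega>. kW (t - TT j \<omega>) \<partial>M)"
    by (simp add: a_def E_LL_Suc add.commute)
  have q1: "ennreal (mean_time F) * a 0 = (\<integral>\<^sup>+ s. ennreal (2 * s * Gt F s) * indicator {0..<t} s \<partial>lborel)"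
    unfolding a_def by (rule E_LL0[OF t])
  have q2: "ennreal (mean_time F) * (\<Sum>j. \<integral>\<^sup>+\<omega>. kW (t - TT j \<omega>) \<partial>M) = KK kW t"
    by (rule renewal_lim[OF kW_meas kW_neg KK_kW_fin[OF t]])
  have "ennreal (mean_time F) * (\<Sum>i. a i)
      = (\<integral>\<^sup>+ s. ennreal (2 * s * Gt F s) * indicator {0..<t} s \<partial>lborel) + KK kW t"
    unfolding sp distrib_left q1 q2 ..
  also have "\<dots> = (\<integral>\<^sup>+ s. ennreal (2 * s * Gt F s) * indicator {0..t} s + kW s * indicator {..t} s \<partial>lborel)"
  proof -
    have e1: "(\<integral>\<^sup>+ s. ennreal (2 * s * Gt F s) * indicator {0..<t} s \<partial>lborel)
        = (\<integral>\<^sup>+ s. ennreal (2 * s * Gt F s) * indicator {0..t} s \<partial>lborel)"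
      by (intro nn_integral_cong_AE) (use AE_lborel_singleton[of t] in \<open>auto simp: indicator_def\<close>)
    have e2: "(\<integral>\<^sup>+ s. ennreal (2 * s * Gt F s) * indicator {0..t} s + kW s * indicator {..t} s \<partial>lborel)
      = (\<integral>\<^sup>+ s. ennreal (2 * s * Gt F s) * indicator {0..t} s \<partial>lborel) + (\<integral>\<^sup>+ s. kW s * indicator {..t} s \<partial>lborel)"
      by (rule nn_integral_add) measurable
    show ?thesis unfolding KK_def by (simp only: e1 e2)
  qed
  also have "\<dots> = (\<integral>\<^sup>+ s. ennreal (indicator {0..t} s * hh F s) \<partial>lborel)"
  proof (intro nn_integral_cong)
    fix s
    show "ennreal (2 * s * Gt F s) * indicator {0..t} s + kW s * indicator {..t} s = ennreal (indicator {0..t} s * hh F s)"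
    proof (cases "0 \<le> s \<and> s \<le> t")
      case True
      have "ennreal (2 * s * Gt F s) + ennreal (WW F s) = ennreal (2 * s * Gt F s + WW F s)"
        by (rule ennreal_plus[symmetric]) (use True FP.Gt_nonneg[of s] FP.WW_nonneg[of s] in auto)
      then show ?thesis using True kW_eq[OF FP, of s] by (simp add: hh_def indicator_def)
    next
      case False
      then show ?thesis by (auto simp: indicator_def kW_neg)
    qed
  qed
  also have "\<dots> = ennreal (AA F t)"
    unfolding AA_def set_lebesgue_integral_def using FP.hh_int[of t] FP.hh_nonneg
    unfolding set_integrable_def
    by (subst nn_integral_eq_integral) (auto simp: indicator_def)
  finally show ?thesis unfolding a_def .
qed

end

context eqsetup begin

definition MS where "MS = sigma (space M) (\<Union>k. {S k -` A \<inter> space M | A. A \<in> sets borel})"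
definition MV where "MV = sigma (space M) (\<Union>k. {V k -` A \<inter> space M | A. A \<in> sets borel})"

lemma space_MS: "space MS = space M" unfolding MS_def by (rule space_measure_of) auto
lemma sets_MS: "sets MS = sigma_sets (space M) (\<Union>k. {S k -` A \<inter> space M | A. A \<in> sets borel})"
  unfolding MS_def by (rule sets_measure_of) auto
lemma space_MV: "space MV = space M" unfolding MV_def by (rule space_measure_of) auto
lemma sets_MV: "sets MV = sigma_sets (space M) (\<Union>k. {V k -` A \<inter> space M | A. A \<in> sets borel})"
  unfolding MV_def by (rule sets_measure_of) auto

lemma S_MS[measurable]: "S k \<in> borel_measurable MS"
proof (rule measurableI)
  fix A :: "real set" assume "A \<in> sets borel"
  then show "S k -` A \<inter> space MS \<in> sets MS"
    unfolding space_MS sets_MS by (intro sigma_sets.Basic) blast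
qed simp

lemma V_MV[measurable]: "V k \<in> borel_measurable MV"
proof (rule measurableI)
  fix A :: "'v set" assume "A \<in> sets borel"
  then show "V k -` A \<inter> space MV \<in> sets MV"
    unfolding space_MV sets_MV by (intro sigma_sets.Basic) blast
qed simp

lemma indep_SV:
  fixes f g :: "'a \<Rightarrow> real"
  assumes fS: "f \<in> borel_measurable MS" and gV: "g \<in> borel_measurable MV"
    and fM: "f \<in> borel_measurable M" and gM: "g \<in> borel_measurable M"
  shows "indep_var borel f borel g"
  unfolding indep_var_eq
proof (intro conjI)
  show "random_variable borel f" "random_variable borel g" by fact+
  have sub1: "sigma_sets (space M) {f -` A \<inter> space M | A. A \<in> sets borel}
      \<subseteq> sigma_sets (space M) (\<Union>k. {S k -` A \<inter> space M | A. A \<in> sets borel})"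
  proof -
    interpret sa: sigma_algebra "space M" "sigma_sets (space M) (\<Union>k. {S k -` A \<inter> space M | A. A \<in> sets borel})"
      by (rule sigma_algebra_sigma_sets) blast
    show ?thesis
    proof (rule sa.sigma_sets_subset)
      show "{f -` A \<inter> space M | A. A \<in> sets borel} \<subseteq> sigma_sets (space M) (\<Union>k. {S k -` A \<inter> space M | A. A \<in> sets borel})"
      proof
        fix X assume "X \<in> {f -` A \<inter> space M | A. A \<in> sets borel}"
        then obtain A :: "real set" where A: "A \<in> sets borel" "X = f -` A \<inter> space M" by (auto simp only: mem_Collect_eq)
        show "X \<in> sigma_sets (space M) (\<Union>k. {S k -` A \<inter> space M | A. A \<in> sets borel})"
          using measurable_sets[OF fS A(1)] unfolding A(2) space_MS sets_MS .
      qed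
    qed
  qed
  have sub2: "sigma_sets (space M) {g -` A \<inter> space M | A. A \<in> sets borel}
      \<subseteq> sigma_sets (space M) (\<Union>k. {V k -` A \<inter> space M | A. A \<in> sets borel})"
  proof -
    interpret sa: sigma_algebra "space M" "sigma_sets (space M) (\<Union>k. {V k -` A \<inter> space M | A. A \<in> sets borel})"
      by (rule sigma_algebra_sigma_sets) blast
    show ?thesis
    proof (rule sa.sigma_sets_subset)
      show "{g -` A \<inter> space M | A. A \<in> sets borel} \<subseteq> sigma_sets (space M) (\<Union>k. {V k -` A \<inter> space M | A. A \<in> sets borel})"
      proof
        fix X assume "X \<in> {g -` A \<inter> space M | A. A \<in> sets borel}"
        then obtain A :: "real set" where A: "A \<in> sets borel" "X = g -` A \<inter> space M" by (auto simp only: mem_Collect_eq)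
        show "X \<in> sigma_sets (space M) (\<Union>k. {V k -` A \<inter> space M | A. A \<in> sets borel})"
          using measurable_sets[OF gV A(1)] unfolding A(2) space_MV sets_MV .
      qed
    qed
  qed
  show "indep_set (sigma_sets (space M) {f -` A \<inter> space M | A. A \<in> sets borel})
     (sigma_sets (space M) {g -` A \<inter> space M | A. A \<in> sets borel})"
    using indSV unfolding indep_set_def
  proof (rule indep_sets_mono_sets)
    fix b :: bool
    show "case_bool (sigma_sets (space M) {f -` A \<inter> space M | A. A \<in> sets borel})
         (sigma_sets (space M) {g -` A \<inter> space M | A. A \<in> sets borel}) b
         \<subseteq> case_bool (sigma_sets (space M) (\<Union>k. {S k -` A \<inter> space M | A. A \<in> sets borel}))
          (sigma_sets (space M) (\<Union>k. {V k -` B \<inter> space M | B. B \<in> sets borel})) b"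
      by (cases b) (simp_all only: bool.case sub1 sub2)
  qed
qed

lemma V_distr_int: "integrable M (V i)" and V_distr_mean: "(\<integral>\<omega>. V i \<omega> \<partial>M) = 0"
  and V_sq_int: "integrable M (\<lambda>\<omega>. (norm (V i \<omega>))\<^sup>2)"
  and V_sq_eq: "(\<integral>\<omega>. (norm (V i \<omega>))\<^sup>2 \<partial>M) = (\<integral>\<omega>. (norm (V 0 \<omega>))\<^sup>2 \<partial>M)"
proof -
  have "integrable (distr M borel (V i)) (\<lambda>x. x) = integrable (distr M borel (V 0)) (\<lambda>x. x)"
    by (subst distV[of i]) (rule refl)
  then show "integrable M (V i)" using V_int by (simp add: integrable_distr_eq)
  have "(\<integral>x. x \<partial>distr M borel (V i)) = (\<integral>x. x \<partial>distr M borel (V 0))" by (subst distV[of i]) (rule refl)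
  then show "(\<integral>\<omega>. V i \<omega> \<partial>M) = 0" using V_mean by (simp add: integral_distr)
  have "integrable (distr M borel (V i)) (\<lambda>x. (norm x)\<^sup>2) = integrable (distr M borel (V 0)) (\<lambda>x. (norm x)\<^sup>2)"
    by (subst distV[of i]) (rule refl)
  then show "integrable M (\<lambda>\<omega>. (norm (V i \<omega>))\<^sup>2)" using V_sq by (simp add: integrable_distr_eq)
  have "(\<integral>x. (norm x)\<^sup>2 \<partial>distr M borel (V i)) = (\<integral>x. (norm x)\<^sup>2 \<partial>distr M borel (V 0))" by (subst distV[of i]) (rule refl)
  then show "(\<integral>\<omega>. (norm (V i \<omega>))\<^sup>2 \<partial>M) = (\<integral>\<omega>. (norm (V 0 \<omega>))\<^sup>2 \<partial>M)" by (simp add: integral_distr)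
qed

lemma inner_int: "integrable M (\<lambda>\<omega>. V i \<omega> \<bullet> V j \<omega>)"
proof (rule Bochner_Integration.integrable_bound)
  show "integrable M (\<lambda>\<omega>. (norm (V i \<omega>))\<^sup>2 + (norm (V j \<omega>))\<^sup>2)"
    using V_sq_int by auto
  show "AE \<omega> in M. norm (V i \<omega> \<bullet> V j \<omega>) \<le> norm ((norm (V i \<omega>))\<^sup>2 + (norm (V j \<omega>))\<^sup>2)"
  proof (intro AE_I2)
    fix \<omega>
    have "\<bar>V i \<omega> \<bullet> V j \<omega>\<bar> \<le> norm (V i \<omega>) * norm (V j \<omega>)" by (rule Cauchy_Schwarz_ineq2)
    also have "\<dots> \<le> (norm (V i \<omega>))\<^sup>2 + (norm (V j \<omega>))\<^sup>2"
      using sum_squares_bound[of "norm (V i \<omega>)" "norm (V j \<omega>)"]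
        mult_nonneg_nonneg[OF norm_ge_zero norm_ge_zero, of "V i \<omega>" "V j \<omega>"] by linarith
    finally show "norm (V i \<omega> \<bullet> V j \<omega>) \<le> norm ((norm (V i \<omega>))\<^sup>2 + (norm (V j \<omega>))\<^sup>2)" by simp
  qed
qed measurable

lemma E_inner_off: assumes "i \<noteq> j" shows "(\<integral>\<omega>. V i \<omega> \<bullet> V j \<omega> \<partial>M) = 0"
proof -
  have ind: "indep_var (Pi\<^sub>M {i} (\<lambda>_. borel)) (\<lambda>\<omega>. restrict (\<lambda>k. V k \<omega>) {i})
      (Pi\<^sub>M {j} (\<lambda>_. borel)) (\<lambda>\<omega>. restrict (\<lambda>k. V k \<omega>) {j})"
    by (rule indep_var_restrict[OF indV]) (use assms in auto)
  have comp: "indep_var borel (\<lambda>\<omega>. V i \<omega> \<bullet> b) borel (\<lambda>\<omega>. V j \<omega> \<bullet> b)" for b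
  proof -
    have "indep_var borel ((\<lambda>x. x i \<bullet> b) \<circ> (\<lambda>\<omega>. restrict (\<lambda>k. V k \<omega>) {i}))
        borel ((\<lambda>x. x j \<bullet> b) \<circ> (\<lambda>\<omega>. restrict (\<lambda>k. V k \<omega>) {j}))"
      by (rule indep_var_compose[OF ind]) measurable
    then show ?thesis by (simp add: comp_def)
  qed
  have "(\<integral>\<omega>. V i \<omega> \<bullet> V j \<omega> \<partial>M) = (\<integral>\<omega>. (\<Sum>b\<in>Basis. (V i \<omega> \<bullet> b) * (V j \<omega> \<bullet> b)) \<partial>M)"
    by (intro Bochner_Integration.integral_cong refl) (rule euclidean_inner)
  also have "\<dots> = (\<Sum>b\<in>Basis. (\<integral>\<omega>. (V i \<omega> \<bullet> b) * (V j \<omega> \<bullet> b) \<partial>M))"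
  proof (rule Bochner_Integration.integral_sum[where I=Basis and f="\<lambda>b \<omega>. (V i \<omega> \<bullet> b) * (V j \<omega> \<bullet> b)"])
    fix b :: 'v assume "b \<in> Basis"
    show "integrable M (\<lambda>\<omega>. (V i \<omega> \<bullet> b) * (V j \<omega> \<bullet> b))"
      by (rule indep_var_integrable[OF comp[of b]]) (auto intro!: integrable_inner_left V_distr_int)
  qed
  also have "\<dots> = 0"
  proof (intro sum.neutral ballI)
    fix b :: 'v assume "b \<in> Basis"
    have "(\<integral>\<omega>. (V i \<omega> \<bullet> b) * (V j \<omega> \<bullet> b) \<partial>M) = (\<integral>\<omega>. V i \<omega> \<bullet> b \<partial>M) * (\<integral>\<omega>. V j \<omega> \<bullet> b \<partial>M)"
      by (rule indep_var_lebesgue_integral[OF comp[of b]]) (auto intro!: integrable_inner_left V_distr_int)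
    also have "\<dots> = 0" using V_distr_int V_distr_mean by simp
    finally show "(\<integral>\<omega>. (V i \<omega> \<bullet> b) * (V j \<omega> \<bullet> b) \<partial>M) = 0" .
  qed
  finally show ?thesis .
qed

end

context eqsetup begin

lemma LL_MS[measurable]: "LL t i \<in> borel_measurable MS"
  unfolding LL_def renewal_epoch_def by (cases i) simp_all

lemma LL_sum: "(\<Sum>i\<le>n. LL t i \<omega>) = min t (TT n \<omega>)"
  by (induction n) (simp_all add: LL_def)

lemma LL_bounds: assumes "0 \<le> t" shows "AE \<omega> in M. \<forall>i. 0 \<le> LL t i \<omega> \<and> LL t i \<omega> \<le> t"
  using S_pos
proof eventually_elim
  case (elim \<omega>)
  have TT0: "0 \<le> TT j \<omega>" for j
    unfolding renewal_epoch_def using elim by (intro sum_nonneg) (auto intro: less_imp_le)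
  show ?case
  proof
    fix i show "0 \<le> LL t i \<omega> \<and> LL t i \<omega> \<le> t"
    proof (cases i)
      case 0 then show ?thesis using TT0[of 0] assms by (auto simp: LL_def)
    next
      case (Suc j)
      have "TT j \<omega> \<le> TT (Suc j) \<omega>" using elim[rule_format, of "Suc j"] by (simp add: TT_Suc)
      then show ?thesis using Suc TT0[of j] assms by (auto simp: LL_def min_def)
    qed
  qed
qed

abbreviation vsq where "vsq \<equiv> (\<integral>\<omega>. (norm (V 0 \<omega>))\<^sup>2 \<partial>M)"

lemma LLLL_int: assumes "0 \<le> t" shows "integrable M (\<lambda>\<omega>. LL t i \<omega> * LL t j \<omega>)"
proof (rule Bochner_Integration.integrable_bound)
  show "integrable M (\<lambda>\<omega>. t * t)" by simp
  show "AE \<omega> in M. norm (LL t i \<omega> * LL t j \<omega>) \<le> norm (t * t)"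
    using LL_bounds[OF assms] by eventually_elim (auto intro!: mult_mono simp: abs_mult)
qed measurable

lemma E_cross:
  assumes t: "0 \<le> t"
  shows "integrable M (\<lambda>\<omega>. (LL t i \<omega> * LL t j \<omega>) * (V i \<omega> \<bullet> V j \<omega>))"
    and "(\<integral>\<omega>. (LL t i \<omega> * LL t j \<omega>) * (V i \<omega> \<bullet> V j \<omega>) \<partial>M)
        = (\<integral>\<omega>. LL t i \<omega> * LL t j \<omega> \<partial>M) * (if i = j then vsq else 0)"
proof -
  have ind: "indep_var borel (\<lambda>\<omega>. LL t i \<omega> * LL t j \<omega>) borel (\<lambda>\<omega>. V i \<omega> \<bullet> V j \<omega>)"
    by (rule indep_SV) measurable
  show "integrable M (\<lambda>\<omega>. (LL t i \<omega> * LL t j \<omega>) * (V i \<omega> \<bullet> V j \<omega>))"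
    by (rule indep_var_integrable[OF ind LLLL_int[OF t] inner_int])
  have "(\<integral>\<omega>. (LL t i \<omega> * LL t j \<omega>) * (V i \<omega> \<bullet> V j \<omega>) \<partial>M)
      = (\<integral>\<omega>. LL t i \<omega> * LL t j \<omega> \<partial>M) * (\<integral>\<omega>. V i \<omega> \<bullet> V j \<omega> \<partial>M)"
    by (rule indep_var_lebesgue_integral[OF ind LLLL_int[OF t] inner_int])
  also have "(\<integral>\<omega>. V i \<omega> \<bullet> V j \<omega> \<partial>M) = (if i = j then vsq else 0)"
  proof (cases "i = j")
    case True
    then show ?thesis using V_sq_eq[of j] by (simp add: power2_norm_eq_inner)
  next
    case False then show ?thesis using E_inner_off by simp
  qed
  finally show "(\<integral>\<omega>. (LL t i \<omega> * LL t j \<omega>) * (V i \<omega> \<bullet> V j \<omega>) \<partial>M)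
        = (\<integral>\<omega>. LL t i \<omega> * LL t j \<omega> \<partial>M) * (if i = j then vsq else 0)" .
qed

definition XX :: "real \<Rightarrow> nat \<Rightarrow> 'a \<Rightarrow> 'v" where
  "XX t n \<omega> = (\<Sum>i\<le>n. LL t i \<omega> *\<^sub>R V i \<omega>)"

lemma XX_meas[measurable]: "XX t n \<in> borel_measurable M"
  unfolding XX_def by measurable

lemma XX_sq: "(norm (XX t n \<omega>))\<^sup>2 = (\<Sum>i\<le>n. \<Sum>j\<le>n. (LL t i \<omega> * LL t j \<omega>) * (V i \<omega> \<bullet> V j \<omega>))"
  unfolding power2_norm_eq_inner XX_def inner_sum_left inner_sum_right
  by (simp add: sum_distrib_left algebra_simps inner_commute)

lemma E_XX:
  assumes t: "0 \<le> t"
  shows "(\<integral>\<omega>. (norm (XX t n \<omega>))\<^sup>2 \<partial>M) = vsq * (\<Sum>i\<le>n. \<integral>\<omega>. (LL t i \<omega>)\<^sup>2 \<partial>M)"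
proof -
  have "(\<integral>\<omega>. (norm (XX t n \<omega>))\<^sup>2 \<partial>M)
      = (\<integral>\<omega>. (\<Sum>i\<le>n. \<Sum>j\<le>n. (LL t i \<omega> * LL t j \<omega>) * (V i \<omega> \<bullet> V j \<omega>)) \<partial>M)"
    unfolding XX_sq ..
  also have "\<dots> = (\<Sum>i\<le>n. \<Sum>j\<le>n. (\<integral>\<omega>. (LL t i \<omega> * LL t j \<omega>) * (V i \<omega> \<bullet> V j \<omega>) \<partial>M))"
    using E_cross(1)[OF t]
    by (simp add: Bochner_Integration.integral_sum Bochner_Integration.integrable_sum)
  also have "\<dots> = (\<Sum>i\<le>n. \<Sum>j\<le>n. (\<integral>\<omega>. LL t i \<omega> * LL t j \<omega> \<partial>M) * (if i = j then vsq else 0))"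
    using E_cross(2)[OF t] by simp
  also have "\<dots> = (\<Sum>i\<le>n. (\<integral>\<omega>. LL t i \<omega> * LL t i \<omega> \<partial>M) * vsq)"
    by (simp add: if_distrib cong: if_cong)
  also have "\<dots> = vsq * (\<Sum>i\<le>n. \<integral>\<omega>. (LL t i \<omega>)\<^sup>2 \<partial>M)"
    by (simp add: sum_distrib_left power2_eq_square mult.commute)
  finally show ?thesis .
qed

end

lemma Iint:
  fixes a b t :: real
  assumes "0 \<le> a" "a \<le> b" "0 \<le> t"
  shows "(LINT s|lborel. (indicator {0..t} s * indicator {a..<b} s :: real)) = min t b - min t a"
proof -
  have "(LINT s|lborel. indicator {0..t} s * indicator {a..<b} s) = (LINT s|lborel. (indicator {min t a..min t b} s :: real))"
  proof -
    have "AE s in lborel. indicator {0..t} s * indicator {a..<b} s = (indicator {min t a..min t b} s :: real)"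
      using AE_lborel_singleton[of b] AE_lborel_singleton[of t]
    proof eventually_elim
      case (elim s) then show ?case using assms by (auto simp: indicator_def min_def)
    qed
    then show ?thesis by (intro integral_cong_AE) simp_all
  qed
  also have "\<dots> = measure lborel {min t a..min t b}"
    by (simp add: Bochner_Integration.integral_indicator[of lborel "{min t a..min t b}", unfolded space_lborel, simplified])
  also have "\<dots> = min t b - min t a" using assms by (simp add: min_def)
  finally show ?thesis .
qed

context eqsetup begin

lemma TT_mono_pt: assumes "\<forall>k. 0 < S k \<omega>" "m \<le> n" shows "TT m \<omega> \<le> TT n \<omega>"
proof -
  have step: "TT i \<omega> \<le> TT (Suc i) \<omega>" for i using assms(1)[rule_format, of "Suc i"] by (simp add: TT_Suc)
  show ?thesis by (rule lift_Suc_mono_le[of "\<lambda>n. TT n \<omega>", OF step assms(2)])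
qed

definition lo :: "nat \<Rightarrow> 'a \<Rightarrow> real" where
  "lo i \<omega> = (case i of 0 \<Rightarrow> 0 | Suc j \<Rightarrow> TT j \<omega>)"

lemma velocity_sum:
  assumes pos: "\<forall>k. 0 < S k \<omega>" and s: "0 \<le> s" "s < TT n \<omega>"
  shows "velocity_proc S V s \<omega> = (\<Sum>i\<le>n. indicator {lo i \<omega>..<TT i \<omega>} s *\<^sub>R V i \<omega>)"
proof -
  define m where "m = (LEAST i. s < TT i \<omega>)"
  have m1: "s < TT m \<omega>" unfolding m_def by (rule LeastI[of _ n]) (rule s(2))
  have m2: "m \<le> n" unfolding m_def by (rule Least_le) (rule s(2))
  have m3: "\<not> s < TT i \<omega>" if "i < m" for i using not_less_Least[OF that[unfolded m_def]] m_def by simp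
  have mem: "s \<in> {lo i \<omega>..<TT i \<omega>} \<longleftrightarrow> i = m" for i
  proof
    assume "s \<in> {lo i \<omega>..<TT i \<omega>}"
    then have A: "lo i \<omega> \<le> s" "s < TT i \<omega>" by auto
    have "\<not> i < m" using A(2) m3 by blast
    moreover have "\<not> m < i"
    proof
      assume "m < i"
      then obtain j where j: "i = Suc j" "m \<le> j" by (cases i) auto
      then have "TT m \<omega> \<le> TT j \<omega>" by (intro TT_mono_pt[OF pos])
      then show False using A(1) m1 j by (simp add: lo_def)
    qed
    ultimately show "i = m" by simp
  next
    assume "i = m"
    then show "s \<in> {lo i \<omega>..<TT i \<omega>}"
      using m1 m3 s(1) by (cases m) (auto simp: lo_def not_less)
  qed
  have mem': "indicator {lo i \<omega>..<TT i \<omega>} s *\<^sub>R V i \<omega> = (if i = m then V i \<omega> else 0)" for i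
  proof -
    have "indicator {lo i \<omega>..<TT i \<omega>} s = (if i = m then 1 else (0::real))"
      unfolding indicator_def using mem[of i] by simp
    then show ?thesis by simp
  qed
  have "(\<Sum>i\<le>n. indicator {lo i \<omega>..<TT i \<omega>} s *\<^sub>R V i \<omega>) = (\<Sum>i\<le>n. (if i = m then V i \<omega> else 0))"
    by (intro sum.cong refl) (rule mem')
  also have "\<dots> = V m \<omega>" using m2 by simp
  finally show ?thesis unfolding velocity_proc_def m_def by simp
qed

lemma disp_eq:
  assumes t: "0 \<le> t" and pos: "\<forall>k. 0 < S k \<omega>" and n: "t < TT n \<omega>"
  shows "displacement S V t \<omega> = XX t n \<omega>"
proof -
  have lo_nn: "0 \<le> lo i \<omega>" and lo_le: "lo i \<omega> \<le> TT i \<omega>" for i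
  proof -
    have TT0: "0 \<le> TT j \<omega>" for j
      unfolding renewal_epoch_def using pos by (intro sum_nonneg) (auto intro: less_imp_le)
    show "0 \<le> lo i \<omega>" using TT0 by (cases i) (auto simp: lo_def)
    show "lo i \<omega> \<le> TT i \<omega>" using TT0 TT_mono_pt[OF pos] by (cases i) (auto simp: lo_def)
  qed
  have ii: "integrable lborel (\<lambda>s. indicator {0..t} s * indicator {lo i \<omega>..<TT i \<omega>} s :: real)" for i
  proof -
    have "integrable lborel (\<lambda>s. indicator ({0..t} \<inter> {lo i \<omega>..<TT i \<omega>}) s :: real)"
      by (rule integrable_real_indicator) (auto intro: le_less_trans[OF emeasure_mono[of _ "{0..t}"]] simp: emeasure_lborel_Icc_eq)
    then show ?thesis by (simp add: indicator_inter_arith)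
  qed
  have "displacement S V t \<omega> = (LINT s:{0..t}|lborel. (\<Sum>i\<le>n. indicator {lo i \<omega>..<TT i \<omega>} s *\<^sub>R V i \<omega>))"
    unfolding displacement_def
  proof (rule set_lebesgue_integral_cong)
    show "\<forall>s. s \<in> {0..t} \<longrightarrow> velocity_proc S V s \<omega> = (\<Sum>i\<le>n. indicator {lo i \<omega>..<TT i \<omega>} s *\<^sub>R V i \<omega>)"
    proof (intro allI impI)
      fix s assume "s \<in> {0..t}"
      then show "velocity_proc S V s \<omega> = (\<Sum>i\<le>n. indicator {lo i \<omega>..<TT i \<omega>} s *\<^sub>R V i \<omega>)"
        using n by (intro velocity_sum[OF pos]) auto
    qed
  qed simp
  also have "\<dots> = (LINT s|lborel. (\<Sum>i\<le>n. (indicator {0..t} s * indicator {lo i \<omega>..<TT i \<omega>} s) *\<^sub>R V i \<omega>))"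
    unfolding set_lebesgue_integral_def
    by (intro Bochner_Integration.integral_cong refl) (simp only: scaleR_sum_right scaleR_scaleR)
  also have "\<dots> = (\<Sum>i\<le>n. (LINT s|lborel. (indicator {0..t} s * indicator {lo i \<omega>..<TT i \<omega>} s) *\<^sub>R V i \<omega>))"
  proof (rule Bochner_Integration.integral_sum)
    fix i
    show "integrable lborel (\<lambda>s. (indicator {0..t} s * indicator {lo i \<omega>..<TT i \<omega>} s) *\<^sub>R V i \<omega>)"
      by (intro integrable_scaleR_left ii)
  qed
  also have "\<dots> = (\<Sum>i\<le>n. (LINT s|lborel. indicator {0..t} s * indicator {lo i \<omega>..<TT i \<omega>} s) *\<^sub>R V i \<omega>)"
    by (intro sum.cong refl integral_scaleR_left ii)
  also have "\<dots> = XX t n \<omega>"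
    unfolding XX_def
  proof (intro sum.cong refl arg_cong2[where f=scaleR])
    fix i
    show "(LINT s|lborel. indicator {0..t} s * indicator {lo i \<omega>..<TT i \<omega>} s) = LL t i \<omega>"
      unfolding Iint[OF lo_nn lo_le t] using t by (cases i) (auto simp: LL_def lo_def)
  qed
  finally show ?thesis .
qed

lemma disp_meas[measurable]: "(\<lambda>\<omega>. displacement S V t \<omega>) \<in> borel_measurable M"
proof -
  have L0: "(\<lambda>x. LEAST i. snd x < TT i (fst x)) \<in> measurable (M \<Otimes>\<^sub>M lborel) (count_space UNIV)"
    by (rule measurable_Least) measurable
  have L: "(\<lambda>(\<omega>, s). LEAST i. s < TT i \<omega>) \<in> measurable (M \<Otimes>\<^sub>M lborel) (count_space UNIV)"
    using L0 by (simp add: case_prod_beta)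
  have vp: "(\<lambda>(\<omega>, s). velocity_proc S V s \<omega>) \<in> borel_measurable (M \<Otimes>\<^sub>M lborel)"
  proof -
    have "(\<lambda>x. (\<lambda>i (\<omega>, s). V i \<omega>) ((\<lambda>(\<omega>, s). LEAST i. s < TT i \<omega>) x) x) \<in> borel_measurable (M \<Otimes>\<^sub>M lborel)"
      by (rule measurable_compose_countable[OF _ L]) measurable
    then show ?thesis unfolding velocity_proc_def by (simp add: case_prod_beta)
  qed
  have "(\<lambda>\<omega>. LINT s|lborel. (\<lambda>\<omega> s. indicator {0..t} s *\<^sub>R velocity_proc S V s \<omega>) \<omega> s) \<in> borel_measurable M"
    by (rule lborel.borel_measurable_lebesgue_integral) (use vp in measurable)
  then show ?thesis unfolding displacement_def set_lebesgue_integral_def by simp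
qed

end

lemma wcs:
  fixes a x :: "nat \<Rightarrow> real"
  assumes "\<And>i. i \<in> A \<Longrightarrow> 0 \<le> a i"
  shows "(\<Sum>i\<in>A. a i * x i)\<^sup>2 \<le> (\<Sum>i\<in>A. a i) * (\<Sum>i\<in>A. a i * (x i)\<^sup>2)"
proof -
  have "(\<Sum>i\<in>A. sqrt (a i) * (sqrt (a i) * x i))\<^sup>2 \<le> (\<Sum>i\<in>A. (sqrt (a i))\<^sup>2) * (\<Sum>i\<in>A. (sqrt (a i) * x i)\<^sup>2)"
    by (rule Cauchy_Schwarz_ineq_sum)
  moreover have "(\<Sum>i\<in>A. sqrt (a i) * (sqrt (a i) * x i)) = (\<Sum>i\<in>A. a i * x i)"
    using assms by (intro sum.cong refl) (simp add: mult.assoc[symmetric])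
  moreover have "(\<Sum>i\<in>A. (sqrt (a i))\<^sup>2) = (\<Sum>i\<in>A. a i)"
    using assms by (intro sum.cong refl) simp
  moreover have "(\<Sum>i\<in>A. (sqrt (a i) * x i)\<^sup>2) = (\<Sum>i\<in>A. a i * (x i)\<^sup>2)"
    using assms by (intro sum.cong refl) (simp add: power_mult_distrib)
  ultimately show ?thesis by simp
qed

context eqsetup begin

definition UU :: "real \<Rightarrow> 'a \<Rightarrow> ennreal" where
  "UU t \<omega> = (\<Sum>i. ennreal (LL t i \<omega> * (norm (V i \<omega>))\<^sup>2))"

lemma UU_meas[measurable]: "UU t \<in> borel_measurable M"
  unfolding UU_def by measurable

lemma V_sq_nn: "(\<integral>\<^sup>+\<omega>. ennreal ((norm (V i \<omega>))\<^sup>2) \<partial>M) = ennreal vsq"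
  using V_sq_int[of i] V_sq_eq[of i] by (subst nn_integral_eq_integral) auto

lemma E_LV:
  "(\<integral>\<^sup>+\<omega>. ennreal (LL t i \<omega> * (norm (V i \<omega>))\<^sup>2) \<partial>M) = (\<integral>\<^sup>+\<omega>. ennreal (LL t i \<omega>) \<partial>M) * ennreal vsq"
proof -
  have ind: "indep_var borel (LL t i) borel (\<lambda>\<omega>. (norm (V i \<omega>))\<^sup>2)"
    by (rule indep_SV) measurable
  have "(\<integral>\<^sup>+\<omega>. ennreal (LL t i \<omega> * (norm (V i \<omega>))\<^sup>2) \<partial>M)
      = (\<integral>\<^sup>+\<omega>. (\<integral>\<^sup>+\<omega>'. ennreal (LL t i \<omega> * (norm (V i \<omega>'))\<^sup>2) \<partial>M) \<partial>M)"
    by (rule indep_nn[OF ind, where h="\<lambda>x y. ennreal (x * y)"]) measurable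
  also have "\<dots> = (\<integral>\<^sup>+\<omega>. ennreal (LL t i \<omega>) * ennreal vsq \<partial>M)"
  proof (intro nn_integral_cong)
    fix \<omega>
    have "(\<integral>\<^sup>+\<omega>'. ennreal (LL t i \<omega> * (norm (V i \<omega>'))\<^sup>2) \<partial>M)
        = (\<integral>\<^sup>+\<omega>'. ennreal (LL t i \<omega>) * ennreal ((norm (V i \<omega>'))\<^sup>2) \<partial>M)"
      by (intro nn_integral_cong) (simp add: ennreal_mult'')
    also have "\<dots> = ennreal (LL t i \<omega>) * ennreal vsq"
      by (subst nn_integral_cmult) (auto simp: V_sq_nn)
    finally show "(\<integral>\<^sup>+\<omega>'. ennreal (LL t i \<omega> * (norm (V i \<omega>'))\<^sup>2) \<partial>M) = ennreal (LL t i \<omega>) * ennreal vsq" .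
  qed
  also have "\<dots> = (\<integral>\<^sup>+\<omega>. ennreal (LL t i \<omega>) \<partial>M) * ennreal vsq"
    by (rule nn_integral_multc) measurable
  finally show ?thesis .
qed

lemma sumLL_le: assumes t: "0 \<le> t"
  shows "AE \<omega> in M. (\<Sum>i. ennreal (LL t i \<omega>)) \<le> ennreal t"
  using LL_bounds[OF t]
proof eventually_elim
  case (elim \<omega>)
  show ?case unfolding suminf_eq_SUP
  proof (rule SUP_least)
    fix n
    have "(\<Sum>i<n. LL t i \<omega>) \<le> t"
    proof (cases n)
      case 0 then show ?thesis using t by simp
    next
      case (Suc m)
      then have "{..<n} = {..m}" by auto
      then show ?thesis using LL_sum[where t=t and n=m and \<omega>=\<omega>] by simp
    qed
    then show "(\<Sum>i<n. ennreal (LL t i \<omega>)) \<le> ennreal t"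
      using elim by (subst sum_ennreal) (auto intro: ennreal_leI)
  qed
qed

lemma UU_int: assumes t: "0 \<le> t" shows "(\<integral>\<^sup>+\<omega>. UU t \<omega> \<partial>M) \<le> ennreal t * ennreal vsq"
proof -
  have "(\<integral>\<^sup>+\<omega>. UU t \<omega> \<partial>M) = (\<Sum>i. \<integral>\<^sup>+\<omega>. ennreal (LL t i \<omega> * (norm (V i \<omega>))\<^sup>2) \<partial>M)"
    unfolding UU_def by (rule nn_integral_suminf) measurable
  also have "\<dots> = (\<Sum>i. (\<integral>\<^sup>+\<omega>. ennreal (LL t i \<omega>) \<partial>M)) * ennreal vsq"
    unfolding E_LV by simp
  also have "(\<Sum>i. (\<integral>\<^sup>+\<omega>. ennreal (LL t i \<omega>) \<partial>M)) = (\<integral>\<^sup>+\<omega>. (\<Sum>i. ennreal (LL t i \<omega>)) \<partial>M)"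
    by (rule nn_integral_suminf[symmetric]) measurable
  also have "\<dots> \<le> (\<integral>\<^sup>+\<omega>. ennreal t \<partial>M)"
    by (rule nn_integral_mono_AE[OF sumLL_le[OF t]])
  also have "\<dots> = ennreal t" by (simp add: emeasure_space_1)
  finally show ?thesis by (simp add: mult_right_mono)
qed

lemma XX_bound:
  assumes t: "0 \<le> t" and LLb: "\<forall>i. 0 \<le> LL t i \<omega> \<and> LL t i \<omega> \<le> t" and fin: "UU t \<omega> < \<infinity>"
  shows "(norm (XX t n \<omega>))\<^sup>2 \<le> t * enn2real (UU t \<omega>)"
proof -
  have B: "(\<Sum>i\<le>n. LL t i \<omega> * (norm (V i \<omega>))\<^sup>2) \<le> enn2real (UU t \<omega>)"
  proof -
    have nn: "0 \<le> LL t i \<omega> * (norm (V i \<omega>))\<^sup>2" for i using LLb by simp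
    have "ennreal (\<Sum>i\<le>n. LL t i \<omega> * (norm (V i \<omega>))\<^sup>2) = (\<Sum>i\<le>n. ennreal (LL t i \<omega> * (norm (V i \<omega>))\<^sup>2))"
      using nn by (simp add: sum_ennreal)
    also have "\<dots> = (\<Sum>i<Suc n. ennreal (LL t i \<omega> * (norm (V i \<omega>))\<^sup>2))"
      by (simp add: lessThan_Suc_atMost)
    also have "\<dots> \<le> UU t \<omega>" unfolding UU_def by (rule sum_le_suminf) auto
    finally have "ennreal (\<Sum>i\<le>n. LL t i \<omega> * (norm (V i \<omega>))\<^sup>2) \<le> UU t \<omega>" .
    then have "enn2real (ennreal (\<Sum>i\<le>n. LL t i \<omega> * (norm (V i \<omega>))\<^sup>2)) \<le> enn2real (UU t \<omega>)"
      using fin by (intro enn2real_mono) auto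
    then show ?thesis using nn by (simp add: sum_nonneg)
  qed
  have "norm (XX t n \<omega>) \<le> (\<Sum>i\<le>n. norm (LL t i \<omega> *\<^sub>R V i \<omega>))"
    unfolding XX_def by (rule norm_sum)
  also have "\<dots> = (\<Sum>i\<le>n. LL t i \<omega> * norm (V i \<omega>))"
    using LLb by (intro sum.cong refl) simp
  finally have "norm (XX t n \<omega>) \<le> (\<Sum>i\<le>n. LL t i \<omega> * norm (V i \<omega>))" .
  then have "(norm (XX t n \<omega>))\<^sup>2 \<le> (\<Sum>i\<le>n. LL t i \<omega> * norm (V i \<omega>))\<^sup>2"
    by (intro power_mono) auto
  also have "\<dots> \<le> (\<Sum>i\<le>n. LL t i \<omega>) * (\<Sum>i\<le>n. LL t i \<omega> * (norm (V i \<omega>))\<^sup>2)"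
    by (rule wcs) (use LLb in auto)
  also have "\<dots> \<le> t * (\<Sum>i\<le>n. LL t i \<omega> * (norm (V i \<omega>))\<^sup>2)"
    unfolding LL_sum using LLb by (intro mult_right_mono sum_nonneg) auto
  also have "\<dots> \<le> t * enn2real (UU t \<omega>)"
    using B t by (intro mult_left_mono)
  finally show ?thesis .
qed

lemma msd_formula:
  assumes FP: "Fprops F" and t: "0 \<le> t"
  shows "mean_time F * msd M S V t = vsq * AA F t"
proof -
  interpret FP: Fprops F by fact
  define a where "a i = (\<integral>\<omega>. (LL t i \<omega>)\<^sup>2 \<partial>M)" for i
  have LLint: "integrable M (\<lambda>\<omega>. (LL t i \<omega>)\<^sup>2)" for i
    using LLLL_int[OF t, of i i] by (simp add: power2_eq_square)
  have a_nn: "0 \<le> a i" for i unfolding a_def by simp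
  have a_enn: "ennreal (a i) = (\<integral>\<^sup>+\<omega>. ennreal ((LL t i \<omega>)\<^sup>2) \<partial>M)" for i
    unfolding a_def using LLint[of i] by (subst nn_integral_eq_integral) auto
  have sA: "ennreal (mean_time F) * (\<Sum>i. ennreal (a i)) = ennreal (AA F t)"
    unfolding a_enn by (rule sum_LL[OF FP t])
  have AAnn: "0 \<le> AA F t" unfolding AA_def by (rule setint_nonneg) (rule FP.hh_nonneg)
  have "(\<Sum>i. ennreal (a i)) \<noteq> \<top>"
  proof
    assume "(\<Sum>i. ennreal (a i)) = \<top>"
    then show False using sA meanF_pos by (simp add: ennreal_mult_top)
  qed
  then have sm: "summable a" by (rule summable_suminf_not_top[OF a_nn])
  have "ennreal (mean_time F * suminf a) = ennreal (AA F t)"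
    using sA unfolding suminf_ennreal2[OF a_nn sm] using meanF_pos a_nn
    by (simp add: ennreal_mult suminf_nonneg[OF sm])
  then have key: "mean_time F * suminf a = AA F t"
    using AAnn meanF_pos by (subst (asm) ennreal_inj) (auto intro!: mult_nonneg_nonneg suminf_nonneg[OF sm] a_nn)
  define w where "w \<omega> = t * enn2real (UU t \<omega>)" for \<omega>
  have Ufin: "(\<integral>\<^sup>+\<omega>. UU t \<omega> \<partial>M) < \<infinity>"
    using UU_int[OF t] by (rule le_less_trans) (simp add: ennreal_mult_less_top)
  have AEfin: "AE \<omega> in M. UU t \<omega> < \<infinity>"
    by (rule finite_nn_integral_imp_ae_finite[OF UU_meas Ufin])
  have wint: "integrable M w"
    unfolding integrable_iff_bounded
  proof
    show "w \<in> borel_measurable M" unfolding w_def by measurable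
    have "(\<integral>\<^sup>+\<omega>. ennreal (norm (w \<omega>)) \<partial>M) \<le> (\<integral>\<^sup>+\<omega>. ennreal t * UU t \<omega> \<partial>M)"
    proof (rule nn_integral_mono)
      fix \<omega>
      have "ennreal (norm (w \<omega>)) = ennreal t * ennreal (enn2real (UU t \<omega>))"
        unfolding w_def using t by (simp add: ennreal_mult abs_mult)
      also have "\<dots> \<le> ennreal t * UU t \<omega>"
        by (intro mult_left_mono) (auto simp: ennreal_enn2real_if)
      finally show "ennreal (norm (w \<omega>)) \<le> ennreal t * UU t \<omega>" .
    qed
    also have "\<dots> = ennreal t * (\<integral>\<^sup>+\<omega>. UU t \<omega> \<partial>M)" by (rule nn_integral_cmult) measurable
    also have "\<dots> < \<infinity>" using Ufin by (simp add: ennreal_mult_less_top)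
    finally show "(\<integral>\<^sup>+\<omega>. ennreal (norm (w \<omega>)) \<partial>M) < \<infinity>" .
  qed
  have lim2: "(\<lambda>n. \<integral>\<omega>. (norm (XX t n \<omega>))\<^sup>2 \<partial>M) \<longlonglongrightarrow> (\<integral>\<omega>. (norm (displacement S V t \<omega>))\<^sup>2 \<partial>M)"
  proof (rule integral_dominated_convergence[OF _ _ wint])
    show "(\<lambda>\<omega>. (norm (displacement S V t \<omega>))\<^sup>2) \<in> borel_measurable M" by measurable
    show "(\<lambda>\<omega>. (norm (XX t n \<omega>))\<^sup>2) \<in> borel_measurable M" for n by measurable
    show "AE \<omega> in M. norm ((norm (XX t n \<omega>))\<^sup>2) \<le> w \<omega>" for n
      using LL_bounds[OF t] AEfin
      by eventually_elim (simp add: w_def XX_bound[OF t])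
    show "AE \<omega> in M. (\<lambda>n. (norm (XX t n \<omega>))\<^sup>2) \<longlonglongrightarrow> (norm (displacement S V t \<omega>))\<^sup>2"
      using S_pos TT_unbounded
    proof eventually_elim
      case (elim \<omega>)
      obtain m :: nat where m: "t < real m" using reals_Archimedean2 by blast
      obtain N where N: "real m < TT N \<omega>" using elim(2) by blast
      have "eventually (\<lambda>n. (norm (XX t n \<omega>))\<^sup>2 = (norm (displacement S V t \<omega>))\<^sup>2) sequentially"
        unfolding eventually_sequentially
      proof (intro exI allI impI)
        fix n assume "N \<le> n"
        then have "TT N \<omega> \<le> TT n \<omega>" by (rule TT_mono_pt[OF elim(1)])
        then have "t < TT n \<omega>" using m N by linarith
        then show "(norm (XX t n \<omega>))\<^sup>2 = (norm (displacement S V t \<omega>))\<^sup>2"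
          using disp_eq[OF t elim(1)] by simp
      qed
      then show ?case by (rule tendsto_eventually)
    qed
  qed
  have lim1: "(\<lambda>n. \<integral>\<omega>. (norm (XX t n \<omega>))\<^sup>2 \<partial>M) \<longlonglongrightarrow> vsq * suminf a"
    unfolding E_XX[OF t] a_def[symmetric]
    by (intro tendsto_mult_left summable_LIMSEQ' sm)
  have "msd M S V t = vsq * suminf a"
    unfolding msd_def using LIMSEQ_unique[OF lim2 lim1] .
  then show ?thesis using key by (simp add: algebra_simps)
qed

end

lemma setup_to_locale:
  assumes "eq_renewal_setup M F S V" "F 0 = 0" "set_integrable lborel {0..} (\<lambda>s. 1 - F s)"
    "integrable M (V 0)" "(\<integral>\<omega>. V 0 \<omega> \<partial>M) = 0" "integrable M (\<lambda>\<omega>. (norm (V 0 \<omega>))^2)"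
  shows "eqsetup M F S V"
  using assms unfolding eq_renewal_setup_def eqsetup_def eqsetup_axioms_def by auto

theorem theorem5p2:
  fixes F F' :: "real \<Rightarrow> real"
    and M :: "'a measure" and S :: "nat \<Rightarrow> 'a \<Rightarrow> real" and V :: "nat \<Rightarrow> 'a \<Rightarrow> 'v::euclidean_space"
    and N :: "'b measure" and S' :: "nat \<Rightarrow> 'b \<Rightarrow> real" and V' :: "nat \<Rightarrow> 'b \<Rightarrow> 'v"
  assumes F_cont: "continuous_on UNIV F" and F'_cont: "continuous_on UNIV F'"
    and F_pos: "F 0 = 0" and F'_pos: "F' 0 = 0"
    and F_mean: "set_integrable lborel {0..} (\<lambda>s. 1 - F s)"
    and F'_mean: "set_integrable lborel {0..} (\<lambda>s. 1 - F' s)"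
    and F_var: "nn_integral lborel (\<lambda>s. ennreal (2 * s * (1 - F s)) * indicator {0..} s) = \<infinity>"
    and F'_var: "nn_integral lborel (\<lambda>s. ennreal (2 * s * (1 - F' s)) * indicator {0..} s) = \<infinity>"
    and hyp_setup: "eq_renewal_setup M F S V"
    and hyp_setup': "eq_renewal_setup N F' S' V'"
    and V_mean0: "integrable M (V 0)" "(\<integral>\<omega>. V 0 \<omega> \<partial>M) = 0"
    and V_sq: "integrable M (\<lambda>\<omega>. (norm (V 0 \<omega>))^2)" "(\<integral>\<omega>. (norm (V 0 \<omega>))^2 \<partial>M) > 0"
    and same_V: "distr N borel (V' 0) = distr M borel (V 0)"
    and tails: "(\<lambda>t. 1 - F t) \<sim>[at_top] (\<lambda>t. 1 - F' t)"
  shows "(\<lambda>t. mean_time F * msd M S V t) \<sim>[at_top] (\<lambda>t. mean_time F' * msd N S' V' t)"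
proof -
  interpret A: eqsetup M F S V
    by (rule setup_to_locale[OF hyp_setup F_pos F_mean V_mean0 V_sq(1)])
  have pN: "prob_space N" and iV: "prob_space.indep_vars N (\<lambda>_. borel) V' UNIV"
    using hyp_setup' unfolding eq_renewal_setup_def by auto
  have V'meas: "V' 0 \<in> borel_measurable N"
    using iV unfolding prob_space.indep_vars_def[OF pN] by auto
  have "integrable (distr N borel (V' 0)) (\<lambda>x. x) = integrable (distr M borel (V 0)) (\<lambda>x. x)"
    by (simp only: same_V)
  then have V'int: "integrable N (V' 0)"
    using V_mean0(1) by (simp add: integrable_distr_eq V'meas)
  have "(\<integral>x. x \<partial>distr N borel (V' 0)) = (\<integral>x. x \<partial>distr M borel (V 0))"
    by (simp only: same_V)
  then have V'mean: "(\<integral>\<omega>. V' 0 \<omega> \<partial>N) = 0"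
    using V_mean0(2) by (simp add: integral_distr V'meas)
  have "integrable (distr N borel (V' 0)) (\<lambda>x. (norm x)\<^sup>2) = integrable (distr M borel (V 0)) (\<lambda>x. (norm x)\<^sup>2)"
    by (simp only: same_V)
  then have V'sq: "integrable N (\<lambda>\<omega>. (norm (V' 0 \<omega>))\<^sup>2)"
    using V_sq(1) by (simp add: integrable_distr_eq V'meas)
  have "(\<integral>x. (norm x)\<^sup>2 \<partial>distr N borel (V' 0)) = (\<integral>x. (norm x)\<^sup>2 \<partial>distr M borel (V 0))"
    by (simp only: same_V)
  then have vsq_eq: "(\<integral>\<omega>. (norm (V' 0 \<omega>))\<^sup>2 \<partial>N) = (\<integral>\<omega>. (norm (V 0 \<omega>))\<^sup>2 \<partial>M)"
    by (simp add: integral_distr V'meas)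
  interpret B: eqsetup N F' S' V'
    by (rule setup_to_locale[OF hyp_setup' F'_pos F'_mean V'int V'mean V'sq])
  have FA: "Fprops F" using F_cont A.F_le1 F_mean F_var by unfold_locales auto
  have FB: "Fprops F'" using F'_cont B.F_le1 F'_mean F'_var by unfold_locales auto
  define c where "c = (\<integral>\<omega>. (norm (V 0 \<omega>))\<^sup>2 \<partial>M)"
  have e1: "eventually (\<lambda>t. mean_time F * msd M S V t = c * AA F t) at_top"
    unfolding eventually_at_top_linorder c_def by (intro exI[of _ 0] allI impI A.msd_formula[OF FA])
  have e2: "eventually (\<lambda>t. mean_time F' * msd N S' V' t = c * AA F' t) at_top"
    unfolding eventually_at_top_linorder c_def
    by (intro exI[of _ 0] allI impI) (simp add: B.msd_formula[OF FB] vsq_eq)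
  have "(\<lambda>t. c * AA F t) \<sim>[at_top] (\<lambda>t. c * AA F' t)"
    by (rule asymp_equiv_mult[OF asymp_equiv_refl AA_equiv[OF FA FB tails]])
  then show ?thesis using asymp_equiv_cong[OF e1 e2] by simp
qed


end
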